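(* Let $\alpha\in(0,1)$ and let $\phi:[0,1]\to[0,\infty)$ be four times continuously differentiable on $(0,1]$ with finite constants $W>0$, $c$, $c'$ such that $(2-\alpha)(3-\alpha)(4-\alpha)Wp^{\alpha-4}+c'\le|\phi^{(4)}(p)|\le(2-\alpha)(3-\alpha)(4-\alpha)Wp^{\alpha-4}+c$ for all $p\in(0,1]$. Let $n\ge1$, and $\Delta,p$ with $\frac1n\lesssim\Delta<p\le1$, and let $\tilde N\sim\mathrm{Poisson}(np)$. Then $$\mathrm{Var}\Big[\bar\phi_\Delta\Big(\frac{\tilde N}{n}\Big)-\frac{\tilde N}{2n^2}\bar\phi_\Delta^{(2)}\Big(\frac{\tilde N}{n}\Big)-\phi(p)+\frac{p\phi^{(2)}(p)}{2n}\Big]\lesssim\frac{p^{2\alpha-1}}{n}+\frac{1}{n^4\Delta^{4-2\alpha}}+\frac pn.$$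
   Context: For the Bernstein basis $B_{\nu,N}(t)=\binom N\nu t^\nu(1-t)^{N-\nu}$ define $H_L(x;\phi,a,b)=\phi(a)+\sum_{m=1}^L\frac{\phi^{(m)}(a)}{m!}(x-a)^m\sum_{\ell=0}^{L-m}\frac{L+1}{L+\ell+1}B_{\ell,L+\ell+1}\big(\tfrac{x-a}{b-a}\big)$ (derivatives at $1$ are one-sided). For $\Delta\in(0,1]$, $\bar\phi_\Delta:[0,\infty)\to\mathbb{R}$ is $\bar\phi_\Delta(x)=H_4(\Delta/2;\phi,\Delta,\Delta/2)$ if $x\le\Delta/2$; $H_4(x;\phi,\Delta,\Delta/2)$ if $\Delta/2<x<\Delta$; $\phi(x)$ if $\Delta\le x\le1$; $H_4(x;\phi,1,2)$ if $1<x<2$; $H_4(2;\phi,1,2)$ if $x\ge2$; $\bar\phi^{(2)}_\Delta$ is its second derivative. $a\lesssim b$ means $a\le Cb$ for a positive constant $C$ not depending on $n,\Delta,p$ (possibly on $\phi,\alpha$); $\frac1n\lesssim\Delta$ means $\Delta\ge c_0/n$ for a fixed constant $c_0>0$. *)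

theory Defs
  imports "HOL-Analysis.Analysis" "HOL-Probability.Probability"
begin

text \<open>Higher derivatives of a function taken within a set S (one-sided at boundary points of S).
  For phi on [0,1] we use S = (0,1], so the derivatives at 1 are left-sided.\<close>
fun hderiv :: "real set \<Rightarrow> nat \<Rightarrow> (real \<Rightarrow> real) \<Rightarrow> real \<Rightarrow> real" where
  "hderiv S 0 f = f"
| "hderiv S (Suc m) f = (\<lambda>x. vector_derivative (hderiv S m f) (at x within S))"

abbreviation phider :: "nat \<Rightarrow> (real \<Rightarrow> real) \<Rightarrow> real \<Rightarrow> real" where
  "phider m phi \<equiv> hderiv {0<..1} m phi"

text \<open>H_L(x; phi, a, b), with B_{nu,N} = Bernstein N nu.\<close>
definition HL :: "nat \<Rightarrow> real \<Rightarrow> (real \<Rightarrow> real) \<Rightarrow> real \<Rightarrow> real \<Rightarrow> real" where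
  "HL L x phi a b = phi a +
     (\<Sum>m=1..L. phider m phi a / fact m * (x - a) ^ m *
        (\<Sum>l=0..L-m. (real L + 1) / (real L + real l + 1) *
            Bernstein (L + l + 1) l ((x - a) / (b - a))))"

text \<open>The extension bar-phi_Delta; extended to negative arguments by the constant of the first
  branch (only its values on [0,\<infinity>) matter, and this makes its derivatives at 0 the one-sided ones).\<close>
definition phibar :: "(real \<Rightarrow> real) \<Rightarrow> real \<Rightarrow> real \<Rightarrow> real" where
  "phibar phi \<Delta> x =
     (if x \<le> \<Delta> / 2 then HL 4 (\<Delta> / 2) phi \<Delta> (\<Delta> / 2)
      else if x < \<Delta> then HL 4 x phi \<Delta> (\<Delta> / 2)
      else if x \<le> 1 then phi x
      else if x < 2 then HL 4 x phi 1 2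
      else HL 4 2 phi 1 2)"

definition phibar2 :: "(real \<Rightarrow> real) \<Rightarrow> real \<Rightarrow> real \<Rightarrow> real" where
  "phibar2 phi \<Delta> = deriv (deriv (phibar phi \<Delta>))"

end

theory Submission
  imports Defs
begin


lemma pmf_sums_integral:
  assumes "\<And>k. f k \<ge> 0" and "(\<lambda>k. pmf M k * f k) sums s"
  shows "integrable (measure_pmf M) f" "measure_pmf.expectation M f = s"
proof -
  have *: "integrable (count_space UNIV) (\<lambda>k. pmf M k * f k)"
    using assms unfolding integrable_count_space_nat_iff
    by (auto simp: sums_iff abs_mult)
  have **: "measure_pmf.expectation M f = (\<integral>k. pmf M k * f k \<partial>count_space UNIV)"
    unfolding measure_pmf_eq_density by (subst integral_density) auto
  show "integrable (measure_pmf M) f"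
    unfolding measure_pmf_eq_density using *
    by (subst integrable_density) auto
  show "measure_pmf.expectation M f = s"
    unfolding ** using * assms by (subst integral_count_space_nat) (simp_all add: sums_iff)
qed

lemma exp_sums: "(\<lambda>k. x ^ k / fact k) sums exp (x::real)"
  using exp_converges[of x] by (simp add: divide_inverse mult.commute scaleR_conv_of_real)

lemma k_sums: "(\<lambda>k. real k * x ^ k / fact k) sums (x * exp (x::real))"
proof -
  have "(\<lambda>k. real (Suc k) * x ^ (Suc k) / fact (Suc k)) = (\<lambda>k. x * (x ^ k / fact k))"
    by (auto simp: fun_eq_iff fact_Suc divide_simps)
  then have "(\<lambda>k. real (Suc k) * x ^ (Suc k) / fact (Suc k)) sums (x * exp x)"
    using sums_mult[OF exp_sums, of x] by simp
  then show ?thesis by (subst (asm) sums_Suc_iff) simp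
qed

lemma kk_sums: "(\<lambda>k. real k * (real k - 1) * x ^ k / fact k) sums (x^2 * exp (x::real))"
proof -
  have "(\<lambda>k. real (Suc k) * (real (Suc k) - 1) * x ^ (Suc k) / fact (Suc k)) = (\<lambda>k. x * (real k * x ^ k / fact k))"
    by (auto simp: fun_eq_iff fact_Suc divide_simps)
  then have "(\<lambda>k. real (Suc k) * (real (Suc k) - 1) * x ^ (Suc k) / fact (Suc k)) sums (x^2 * exp x)"
    using sums_mult[OF k_sums, of x] by (simp add: power2_eq_square mult.assoc)
  then show ?thesis by (subst (asm) sums_Suc_iff) simp
qed

lemma poisson_second_moment:
  assumes "l > 0"
  shows "integrable (measure_pmf (poisson_pmf l)) (\<lambda>k. (real k - l)^2)"
    "measure_pmf.expectation (poisson_pmf l) (\<lambda>k. (real k - l)^2) = l"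
proof -
  have eq: "(\<lambda>k. pmf (poisson_pmf l) k * (real k - l)^2) =
     (\<lambda>k. exp (-l) * ((real k * (real k - 1) * l ^ k / fact k) + (1 - 2*l) * (real k * l ^ k / fact k)
          + l^2 * (l ^ k / fact k)))"
    using assms by (auto simp: fun_eq_iff field_simps power2_eq_square)
  have "(\<lambda>k. exp (-l) * ((real k * (real k - 1) * l ^ k / fact k) + (1 - 2*l) * (real k * l ^ k / fact k)
          + l^2 * (l ^ k / fact k))) sums (exp (-l) * (l^2 * exp l + (1 - 2*l) * (l * exp l) + l^2 * exp l))"
    by (intro sums_mult sums_add kk_sums k_sums exp_sums)
  also have "exp (-l) * (l^2 * exp l + (1 - 2*l) * (l * exp l) + l^2 * exp l) = l"
    by (simp add: field_simps power2_eq_square exp_minus)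
  finally have s: "(\<lambda>k. pmf (poisson_pmf l) k * (real k - l)^2) sums l" unfolding eq .
  show "integrable (measure_pmf (poisson_pmf l)) (\<lambda>k. (real k - l)^2)"
    "measure_pmf.expectation (poisson_pmf l) (\<lambda>k. (real k - l)^2) = l"
    using pmf_sums_integral[OF _ s] by auto
qed

lemma poisson_half:
  assumes "l > 0"
  shows "integrable (measure_pmf (poisson_pmf l)) (\<lambda>k. (1/2::real)^k)"
    "measure_pmf.expectation (poisson_pmf l) (\<lambda>k. (1/2::real)^k) = exp (-l/2)"
proof -
  have eq: "(\<lambda>k. pmf (poisson_pmf l) k * (1/2::real)^k) = (\<lambda>k. exp (-l) * ((l/2)^k / fact k))"
    using assms by (auto simp: fun_eq_iff field_simps power_divide)
  have "(\<lambda>k. exp (-l) * ((l/2)^k / fact k)) sums (exp (-l) * exp (l/2))"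
    by (intro sums_mult exp_sums)
  also have "exp (-l) * exp (l/2) = exp (-l/2)" by (simp add: exp_add[symmetric])
  finally have s: "(\<lambda>k. pmf (poisson_pmf l) k * (1/2::real)^k) sums exp (-l/2)" unfolding eq .
  show "integrable (measure_pmf (poisson_pmf l)) (\<lambda>k. (1/2::real)^k)"
    "measure_pmf.expectation (poisson_pmf l) (\<lambda>k. (1/2::real)^k) = exp (-l/2)"
    using pmf_sums_integral[OF _ s] by auto
qed




lemma int_bound:
  fixes f f' :: "real \<Rightarrow> real" and A \<beta> :: real
  assumes der: "\<And>x. x \<in> {0<..1} \<Longrightarrow> (f has_real_derivative f' x) (at x within {0<..1})"
    and b: "\<beta> < 0" and A: "A \<ge> 0"
    and bd: "\<And>x. x \<in> {0<..1} \<Longrightarrow> \<bar>f' x\<bar> \<le> A * x powr (\<beta> - 1)"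
    and s: "s \<in> {0<..1}"
  shows "\<bar>f s\<bar> \<le> (\<bar>f 1\<bar> + A / (-\<beta>)) * s powr \<beta>"
proof -
  have s0: "0 < s" "s \<le> 1" using s by auto
  have cont: "continuous_on {s..1} f"
  proof -
    have "continuous_on {0<..1} f"
      using der by (meson DERIV_continuous continuous_on_eq_continuous_within)
    then show ?thesis by (rule continuous_on_subset) (use s0 in auto)
  qed
  have cg: "continuous_on {s..1} (\<lambda>r. (A/\<beta>) * r powr \<beta>)"
    using s0 by (intro continuous_intros) auto
  have dat: "(f has_real_derivative f' x) (at x)" if "s < x" "x < 1" for x
  proof -
    have "at x within {0<..1} = at x"
      by (rule at_within_open_subset[of _ "{0<..<1}"]) (use that s0 in auto)
    then show ?thesis using der[of x] that s0 by simp
  qed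
  have dg: "((\<lambda>r. (A/\<beta>) * r powr \<beta>) has_real_derivative A * x powr (\<beta> - 1)) (at x)" if "0 < x" for x
    using that b by (auto intro!: derivative_eq_intros simp: powr_diff)
  have inc: "f s + (A/\<beta>) * s powr \<beta> \<le> f 1 + (A/\<beta>) * 1 powr \<beta>"
  proof (rule DERIV_nonneg_imp_increasing_open[where f="\<lambda>r. f r + (A/\<beta>) * r powr \<beta>"])
    show "s \<le> 1" using s0 by simp
    show "continuous_on {s..1} (\<lambda>r. f r + (A/\<beta>) * r powr \<beta>)" using cont cg by (intro continuous_on_add continuous_on_diff)
    fix x assume x: "s < x" "x < 1"
    have "\<bar>f' x\<bar> \<le> A * x powr (\<beta> - 1)" using bd x s0 by auto
    then show "\<exists>y. ((\<lambda>r. f r + (A/\<beta>) * r powr \<beta>) has_real_derivative y) (at x) \<and> 0 \<le> y"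
      using DERIV_add[OF dat[OF x] dg[of x]] x s0 by (intro exI[of _ "f' x + A * x powr (\<beta> - 1)"]) auto
  qed
  have dec: "f s - (A/\<beta>) * s powr \<beta> \<ge> f 1 - (A/\<beta>) * 1 powr \<beta>"
  proof (rule DERIV_nonpos_imp_decreasing_open[where f="\<lambda>r. f r - (A/\<beta>) * r powr \<beta>"])
    show "s \<le> 1" using s0 by simp
    show "continuous_on {s..1} (\<lambda>r. f r - (A/\<beta>) * r powr \<beta>)" using cont cg by (intro continuous_on_add continuous_on_diff)
    fix x assume x: "s < x" "x < 1"
    have "\<bar>f' x\<bar> \<le> A * x powr (\<beta> - 1)" using bd x s0 by auto
    then show "\<exists>y. ((\<lambda>r. f r - (A/\<beta>) * r powr \<beta>) has_real_derivative y) (at x) \<and> y \<le> 0"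
      using DERIV_diff[OF dat[OF x] dg[of x]] x s0 by (intro exI[of _ "f' x - A * x powr (\<beta> - 1)"]) auto
  qed
  have sp: "s powr \<beta> \<ge> 1"
  proof -
    have "s powr (-\<beta>) \<le> 1" "s powr (-\<beta>) > 0" using s0 b by (auto intro: powr_le1)
    moreover have "s powr \<beta> = inverse (s powr (-\<beta>))" using s0 by (simp add: powr_minus)
    ultimately show ?thesis by (simp add: one_le_inverse)
  qed
  have Ab: "A/\<beta> \<le> 0" using A b by (simp add: divide_nonneg_neg)
  have "\<bar>f s\<bar> \<le> \<bar>f 1\<bar> + (A / (-\<beta>)) * (s powr \<beta> - 1)"
  proof -
    have e: "(A / (-\<beta>)) * (s powr \<beta> - 1) = A/\<beta> - (A/\<beta>) * s powr \<beta>"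
      by (simp add: algebra_simps)
    have "f 1 \<le> \<bar>f 1\<bar>" "- f 1 \<le> \<bar>f 1\<bar>" by auto
    then show ?thesis using inc dec unfolding e by (simp add: abs_le_iff)
  qed
  also have "\<dots> \<le> \<bar>f 1\<bar> * s powr \<beta> + (A / (-\<beta>)) * s powr \<beta>"
  proof -
    have "\<bar>f 1\<bar> \<le> \<bar>f 1\<bar> * s powr \<beta>" using sp by (simp add: mult_le_cancel_left1)
    moreover have "A / (-\<beta>) \<ge> 0" using divide_nonneg_neg[of A \<beta>] A b by simp
    then have "(A / (-\<beta>)) * (s powr \<beta> - 1) \<le> (A / (-\<beta>)) * s powr \<beta>"
      by (intro mult_left_mono) auto
    ultimately show ?thesis by linarith
  qed
  finally show ?thesis by (simp add: algebra_simps)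
qed


lemma phi_bounds:
  fixes \<alpha> W c c' :: real and \<phi> :: "real \<Rightarrow> real"
  assumes alpha: "0 < \<alpha>" "\<alpha> < 1"
    and diff: "\<forall>k<4. \<forall>x\<in>{0<..1}.
        (phider k \<phi> has_vector_derivative phider (Suc k) \<phi> x) (at x within {0<..1})"
    and W: "W > 0"
    and bound4: "\<forall>p\<in>{0<..1}.
        (2-\<alpha>)*(3-\<alpha>)*(4-\<alpha>)*W*p powr (\<alpha>-4) + c' \<le> \<bar>phider 4 \<phi> p\<bar> \<and>
        \<bar>phider 4 \<phi> p\<bar> \<le> (2-\<alpha>)*(3-\<alpha>)*(4-\<alpha>)*W*p powr (\<alpha>-4) + c"
  shows "\<exists>A>0. \<forall>m\<in>{1..4}. \<forall>x\<in>{0<..1}. \<bar>phider m \<phi> x\<bar> \<le> A * x powr (\<alpha> - real m)"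
proof -
  define K where "K = (2-\<alpha>)*(3-\<alpha>)*(4-\<alpha>)*W"
  have K: "K \<ge> 0" unfolding K_def using alpha W by (intro mult_nonneg_nonneg) auto
  have der: "\<And>k x. k < 4 \<Longrightarrow> x \<in> {0<..1} \<Longrightarrow>
      (phider k \<phi> has_real_derivative phider (Suc k) \<phi> x) (at x within {0<..1})"
    using diff by (simp add: has_real_derivative_iff_has_vector_derivative)
  have ge1: "x powr (\<alpha> - r) \<ge> 1" if "x \<in> {0<..1}" "r \<ge> 1" for x r
  proof -
    have "x powr (r - \<alpha>) \<le> 1" "x powr (r - \<alpha>) > 0" using that alpha by (auto intro: powr_le1)
    moreover have "x powr (\<alpha> - r) = inverse (x powr (r - \<alpha>))" using that by (simp add: powr_minus[symmetric])
    ultimately show ?thesis by (simp add: one_le_inverse)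
  qed
  define A4 where "A4 = K + \<bar>c\<bar>"
  have b4: "\<bar>phider 4 \<phi> x\<bar> \<le> A4 * x powr (\<alpha> - 4)" if "x \<in> {0<..1}" for x
  proof -
    have "\<bar>c\<bar> \<le> \<bar>c\<bar> * x powr (\<alpha> - 4)" using ge1[OF that, of 4] by (simp add: mult_le_cancel_left1)
    moreover have "\<bar>phider 4 \<phi> x\<bar> \<le> K * x powr (\<alpha> - 4) + c"
      using bound4 that unfolding K_def by blast
    ultimately show ?thesis unfolding A4_def by (simp add: algebra_simps)
  qed
  have A4: "A4 \<ge> 0" unfolding A4_def using K by simp
  define A3 where "A3 = \<bar>phider 3 \<phi> 1\<bar> + A4 / (3 - \<alpha>)"
  have b3: "\<bar>phider 3 \<phi> x\<bar> \<le> A3 * x powr (\<alpha> - 3)" if "x \<in> {0<..1}" for x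
    using int_bound[where f="phider 3 \<phi>" and f'="phider 4 \<phi>" and \<beta>="\<alpha> - 3" and A=A4, OF _ _ A4 _ that]
      der[of 3] b4 alpha unfolding A3_def by (auto simp: numeral_eq_Suc)
  have A3: "A3 \<ge> 0" unfolding A3_def using A4 alpha by simp
  define A2 where "A2 = \<bar>phider 2 \<phi> 1\<bar> + A3 / (2 - \<alpha>)"
  have b2: "\<bar>phider 2 \<phi> x\<bar> \<le> A2 * x powr (\<alpha> - 2)" if "x \<in> {0<..1}" for x
    using int_bound[where f="phider 2 \<phi>" and f'="phider 3 \<phi>" and \<beta>="\<alpha> - 2" and A=A3, OF _ _ A3 _ that]
      der[of 2] b3 alpha unfolding A2_def by (auto simp: numeral_eq_Suc)
  have A2: "A2 \<ge> 0" unfolding A2_def using A3 alpha by simp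
  define A1 where "A1 = \<bar>phider 1 \<phi> 1\<bar> + A2 / (1 - \<alpha>)"
  have b1: "\<bar>phider 1 \<phi> x\<bar> \<le> A1 * x powr (\<alpha> - 1)" if "x \<in> {0<..1}" for x
    using int_bound[where f="phider 1 \<phi>" and f'="phider 2 \<phi>" and \<beta>="\<alpha> - 1" and A=A2, OF _ _ A2 _ that]
      der[of 1] b2 alpha unfolding A1_def by (auto simp: numeral_eq_Suc)
  have A1: "A1 \<ge> 0" unfolding A1_def using A2 alpha by simp
  define A where "A = 1 + A1 + A2 + A3 + A4"
  have "A > 0" unfolding A_def using A1 A2 A3 A4 by simp
  moreover have "\<forall>m\<in>{1..4}. \<forall>x\<in>{0<..1}. \<bar>phider m \<phi> x\<bar> \<le> A * x powr (\<alpha> - real m)"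
  proof (intro ballI)
    fix m x assume m: "m \<in> {1..4::nat}" and x: "x \<in> {0<..1::real}"
    have le: "B * x powr (\<alpha> - real m) \<le> A * x powr (\<alpha> - real m)" if "B \<le> A" for B
      using that by (intro mult_right_mono) auto
    have "m = 1 \<or> m = 2 \<or> m = 3 \<or> m = 4" using m by auto
    then show "\<bar>phider m \<phi> x\<bar> \<le> A * x powr (\<alpha> - real m)"
    proof (elim disjE)
      assume "m = 1" then show ?thesis using b1[OF x] le[of A1] A1 A2 A3 A4 unfolding A_def by auto
    next
      assume "m = 2" then show ?thesis using b2[OF x] le[of A2] A1 A2 A3 A4 unfolding A_def by auto
    next
      assume "m = 3" then show ?thesis using b3[OF x] le[of A3] A1 A2 A3 A4 unfolding A_def by auto
    next
      assume "m = 4" then show ?thesis using b4[OF x] le[of A4] A1 A2 A3 A4 unfolding A_def by auto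
    qed
  qed
  ultimately show ?thesis by blast
qed




declare hderiv.simps(2)[simp del]

definition Qp :: "nat \<Rightarrow> real poly" where
  "Qp m = (\<Sum>l=0..4-m. monom (real ((4+l) choose l)) l)"
definition Pp :: "nat \<Rightarrow> real poly" where
  "Pp m = monom 1 m * [:1,-1:]^5 * Qp m"

lemma binom_id: "real (Suc (4+l) choose l) * 5 = real ((4+l) choose l) * (5 + real l)"
proof -
  have "Suc (4+l) * ((4+l) choose 4) = (Suc (4+l) choose Suc 4) * Suc 4"
    by (rule Suc_times_binomial_eq)
  moreover have "(4+l) choose 4 = (4+l) choose l" by (simp add: binomial_symmetric[of 4 "4+l", simplified])
  moreover have "Suc (4+l) choose Suc 4 = Suc (4+l) choose l"
    using binomial_symmetric[of l "Suc (4+l)"] by simp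
  ultimately have "(5+l) * ((4+l) choose l) = (Suc (4+l) choose l) * 5" by simp
  then have "real ((5+l) * ((4+l) choose l)) = real ((Suc (4+l) choose l) * 5)" by metis
  then show ?thesis by (simp add: algebra_simps)
qed

lemma poly_Pp: "poly (Pp m) t = t^m * (1-t)^5 * (\<Sum>l=0..4-m. real ((4+l) choose l) * t^l)"
  unfolding Pp_def Qp_def by (simp add: poly_monom poly_sum)

lemma HL_poly:
  assumes "b \<noteq> a"
  shows "HL 4 x \<phi> a b = \<phi> a + (\<Sum>m=1..4. phider m \<phi> a / fact m * (b-a)^m * poly (Pp m) ((x-a)/(b-a)))"
proof -
  define t where "t = (x-a)/(b-a)"
  have xa: "x - a = (b-a) * t" unfolding t_def using assms by simp
  have "(x - a)^m * (\<Sum>l=0..4-m. (real 4 + 1) / (real 4 + real l + 1) * Bernstein (4 + l + 1) l t)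
     = (b-a)^m * poly (Pp m) t" for m
  proof -
    have "(\<Sum>l=0..4-m. (real 4 + 1) / (real 4 + real l + 1) * Bernstein (4 + l + 1) l t)
        = (1-t)^5 * (\<Sum>l=0..4-m. real ((4+l) choose l) * t^l)"
      unfolding sum_distrib_left
    proof (rule sum.cong[OF refl])
      fix l assume "l \<in> {0..4-m}"
      have e: "real ((l+5) choose l) = real ((l+4) choose l) * (5 + real l) / 5"
        using binom_id[of l] by (simp add: field_simps add.commute)
      show "(real 4 + 1) / (real 4 + real l + 1) * Bernstein (4 + l + 1) l t =
          (1 - t) ^ 5 * (real (4 + l choose l) * t ^ l)"
        unfolding Bernstein_def by (simp add: e field_simps)
    qed
    then show ?thesis unfolding poly_Pp xa by (simp add: power_mult_distrib)
  qed
  note * = this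
  show ?thesis unfolding HL_def t_def[symmetric]
  proof (rule arg_cong[where f="\<lambda>s. \<phi> a + s"], rule sum.cong[OF refl])
    fix m show "phider m \<phi> a / fact m * (x - a) ^ m *
        (\<Sum>l = 0..4 - m. (real 4 + 1) / (real 4 + real l + 1) * Bernstein (4 + l + 1) l t) =
        phider m \<phi> a / fact m * (b - a) ^ m * poly (Pp m) t"
      using *[of m] by (simp only: mult.assoc)
  qed
qed


lemma vanish1:
  assumes "poly B 1 = 0" "poly (pderiv B) 1 = 0" "poly (pderiv (pderiv B)) 1 = 0"
  shows "poly (A*B) 1 = 0" "poly (pderiv (A*B)) 1 = 0" "poly (pderiv (pderiv (A*B))) 1 = (0::real)"
  using assms by (simp_all add: pderiv_mult pderiv_add)

lemma R_vals:
  "poly ([:1,-1:]^5) (1::real) = 0" "poly (pderiv ([:1,-1:]^5)) (1::real) = 0"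
  "poly (pderiv (pderiv ([:1,-1:]^5))) (1::real) = 0"
  by (simp_all add: pderiv_mult pderiv_power_Suc numeral_eq_Suc pderiv_smult pderiv_pCons)

lemma R_vals0:
  "poly ([:1,-1:]^5) (0::real) = 1" "poly (pderiv ([:1,-1:]^5)) (0::real) = -5"
  by (simp_all add: pderiv_mult pderiv_power_Suc numeral_eq_Suc pderiv_smult pderiv_pCons)

lemma Q_vals0: "m \<le> 4 \<Longrightarrow> poly (Qp m) 0 = 1"
  unfolding Qp_def poly_sum poly_monom
  by (subst sum.atLeast_Suc_atMost) (auto simp: sum.neutral)

lemma Q1_deriv0: "poly (pderiv (Qp 1)) 0 = 5"
  unfolding Qp_def by (simp add: numeral_eq_Suc sum.atLeast0_atMost_Suc pderiv_add pderiv_monom poly_monom)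

lemma Pp_vals:
  assumes "m \<in> {1..4}"
  shows "poly (Pp m) 0 = 0"
    "poly (pderiv (Pp m)) 0 = (if m = 1 then 1 else 0)"
    "poly (pderiv (pderiv (Pp m))) 0 = (if m = 2 then 2 else 0)"
    "poly (pderiv (Pp m)) 1 = 0"
    "poly (pderiv (pderiv (Pp m))) 1 = 0"
proof -
  define C where "C = [:1,-1:]^5 * Qp m"
  have P: "Pp m = monom 1 m * C" unfolding Pp_def C_def by (simp add: mult.assoc)
  have C1: "poly C 1 = 0" "poly (pderiv C) 1 = 0" "poly (pderiv (pderiv C)) 1 = 0"
    unfolding C_def mult.commute[of "[:1,-1:]^5"] using vanish1[OF R_vals] by auto
  show "poly (pderiv (Pp m)) 1 = 0" "poly (pderiv (pderiv (Pp m))) 1 = 0"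
    unfolding P using vanish1[OF C1] by auto
  have m: "m = 1 \<or> m = 2 \<or> m = 3 \<or> m = 4" using assms by auto
  have C0: "poly C 0 = 1" unfolding C_def using Q_vals0[of m] R_vals0 assms by simp
  show "poly (Pp m) 0 = 0" using m by (auto simp: P poly_monom)
  show "poly (pderiv (Pp m)) 0 = (if m = 1 then 1 else 0)"
    using m C0 by (auto simp: P pderiv_mult pderiv_monom poly_monom)
  have C10: "m = 1 \<Longrightarrow> poly (pderiv C) 0 = 0"
    unfolding C_def using Q_vals0[of 1] R_vals0 Q1_deriv0 by (simp add: pderiv_mult)
  show "poly (pderiv (pderiv (Pp m))) 0 = (if m = 2 then 2 else 0)"
    using m C0 C10 by (auto simp: P pderiv_mult pderiv_monom poly_monom pderiv_add)
qed


definition HL1 :: "(real \<Rightarrow> real) \<Rightarrow> real \<Rightarrow> real \<Rightarrow> real \<Rightarrow> real" where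
  "HL1 \<phi> a b x = (\<Sum>m=1..4. phider m \<phi> a / fact m * (b-a)^m * poly (pderiv (Pp m)) ((x-a)/(b-a)) / (b-a))"
definition HL2 :: "(real \<Rightarrow> real) \<Rightarrow> real \<Rightarrow> real \<Rightarrow> real \<Rightarrow> real" where
  "HL2 \<phi> a b x = (\<Sum>m=1..4. phider m \<phi> a / fact m * (b-a)^m * poly (pderiv (pderiv (Pp m))) ((x-a)/(b-a)) / (b-a)^2)"

lemma HL_deriv:
  assumes "b \<noteq> a"
  shows "((\<lambda>x. HL 4 x \<phi> a b) has_real_derivative HL1 \<phi> a b x) (at x)"
proof -
  have e: "(\<lambda>x. HL 4 x \<phi> a b) = (\<lambda>x. \<phi> a + (\<Sum>m=1..4. phider m \<phi> a / fact m * (b-a)^m * poly (Pp m) ((x-a)/(b-a))))"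
    using HL_poly[OF assms] by auto
  have g: "((\<lambda>x. (x-a)/(b-a)) has_real_derivative 1/(b-a)) (at x)"
    using assms by (auto intro!: derivative_eq_intros)
  have d: "((\<lambda>x. c * poly (Pp m) ((x-a)/(b-a))) has_real_derivative c * (poly (pderiv (Pp m)) ((x-a)/(b-a)) / (b-a))) (at x)" for m c
    using DERIV_cmult[OF DERIV_chain2[OF poly_DERIV g], of c] by simp
  have "((\<lambda>x. \<phi> a + (\<Sum>m=1..4. phider m \<phi> a / fact m * (b-a)^m * poly (Pp m) ((x-a)/(b-a)))) has_real_derivative
      0 + (\<Sum>m=1..4. phider m \<phi> a / fact m * (b-a)^m * (poly (pderiv (Pp m)) ((x-a)/(b-a)) / (b-a)))) (at x)"
    by (intro DERIV_add DERIV_const DERIV_sum d)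
  then show ?thesis unfolding e HL1_def by (simp add: times_divide_eq_right)
qed


lemma HL1_deriv:
  assumes "b \<noteq> a"
  shows "(HL1 \<phi> a b has_real_derivative HL2 \<phi> a b x) (at x)"
proof -
  have g: "((\<lambda>x. (x-a)/(b-a)) has_real_derivative 1/(b-a)) (at x)"
    using assms by (auto intro!: derivative_eq_intros)
  have d: "((\<lambda>x. c * poly (pderiv (Pp m)) ((x-a)/(b-a)) / (b-a)) has_real_derivative
      c * (poly (pderiv (pderiv (Pp m))) ((x-a)/(b-a)) / (b-a)) / (b-a)) (at x)" for m c
    using DERIV_cdivide[OF DERIV_cmult[OF DERIV_chain2[OF poly_DERIV g], of c], where c="b-a"] by simp
  have "((\<lambda>x. (\<Sum>m=1..4. phider m \<phi> a / fact m * (b-a)^m * poly (pderiv (Pp m)) ((x-a)/(b-a)) / (b-a))) has_real_derivative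
      (\<Sum>m=1..4. phider m \<phi> a / fact m * (b-a)^m * (poly (pderiv (pderiv (Pp m))) ((x-a)/(b-a)) / (b-a)) / (b-a))) (at x)"
    by (intro DERIV_sum d)
  moreover have "(\<Sum>m=1..4. phider m \<phi> a / fact m * (b-a)^m * (poly (pderiv (pderiv (Pp m))) ((x-a)/(b-a)) / (b-a)) / (b-a))
     = HL2 \<phi> a b x"
    unfolding HL2_def by (intro sum.cong refl) (simp add: power2_eq_square)
  ultimately show ?thesis unfolding HL1_def[abs_def] by simp
qed

lemma HL_vals:
  assumes "b \<noteq> a"
  shows "HL 4 a \<phi> a b = \<phi> a" "HL1 \<phi> a b a = phider 1 \<phi> a" "HL2 \<phi> a b a = phider 2 \<phi> a"
    "HL1 \<phi> a b b = 0" "HL2 \<phi> a b b = 0"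
proof -
  have ba: "b - a \<noteq> 0" using assms by simp
  show "HL 4 a \<phi> a b = \<phi> a" unfolding HL_poly[OF assms] using Pp_vals(1) by simp
  have "HL1 \<phi> a b a = (\<Sum>m=1..(4::nat). if m = 1 then phider 1 \<phi> a else 0)"
    unfolding HL1_def by (rule sum.cong[OF refl]) (use Pp_vals(2) ba in auto)
  also have "\<dots> = phider 1 \<phi> a" by (simp add: sum.delta)
  finally show "HL1 \<phi> a b a = phider 1 \<phi> a" .
  have "HL2 \<phi> a b a = (\<Sum>m=1..(4::nat). if m = 2 then phider 2 \<phi> a else 0)"
    unfolding HL2_def by (rule sum.cong[OF refl]) (use Pp_vals(3) ba in \<open>auto simp: power2_eq_square\<close>)
  also have "\<dots> = phider 2 \<phi> a" by (simp add: sum.delta)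
  finally show "HL2 \<phi> a b a = phider 2 \<phi> a" .
  show "HL1 \<phi> a b b = 0" unfolding HL1_def using Pp_vals(4) ba by (intro sum.neutral) auto
  show "HL2 \<phi> a b b = 0" unfolding HL2_def using Pp_vals(5) ba by (intro sum.neutral) auto
qed

lemma Pp_bound: "\<exists>G>0. \<forall>m\<in>{1..4}. \<forall>t\<in>{0..1}. \<bar>poly (pderiv (Pp m)) t\<bar> \<le> G \<and> \<bar>poly (pderiv (pderiv (Pp m))) t\<bar> \<le> G"
proof -
  have pb: "\<exists>B. \<forall>t\<in>{0..1}. \<bar>poly q t\<bar> \<le> (B::real)" for q :: "real poly"
  proof -
    have "compact (poly q ` {0..1})"
      by (intro compact_continuous_image continuous_intros) auto
    then obtain B where "\<forall>y\<in>poly q ` {0..1}. norm y \<le> B" using compact_imp_bounded bounded_iff by metis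
    then show ?thesis by auto
  qed
  have "\<forall>m\<in>{1..4::nat}. \<exists>B. \<forall>t\<in>{0..1}. \<bar>poly (pderiv (Pp m)) t\<bar> \<le> B \<and> \<bar>poly (pderiv (pderiv (Pp m))) t\<bar> \<le> B"
  proof
    fix m :: nat
    obtain B1 where "\<forall>t\<in>{0..1}. \<bar>poly (pderiv (Pp m)) t\<bar> \<le> B1" using pb by blast
    moreover obtain B2 where "\<forall>t\<in>{0..1}. \<bar>poly (pderiv (pderiv (Pp m))) t\<bar> \<le> B2" using pb by blast
    ultimately show "\<exists>B. \<forall>t\<in>{0..1}. \<bar>poly (pderiv (Pp m)) t\<bar> \<le> B \<and> \<bar>poly (pderiv (pderiv (Pp m))) t\<bar> \<le> B"
      by (intro exI[of _ "max B1 B2"]) auto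
  qed
  then obtain Bf where Bf: "\<forall>m\<in>{1..4::nat}. \<forall>t\<in>{0..1}. \<bar>poly (pderiv (Pp m)) t\<bar> \<le> Bf m \<and> \<bar>poly (pderiv (pderiv (Pp m))) t\<bar> \<le> Bf m"
    by metis
  define G where "G = 1 + (\<Sum>m\<in>{1..4::nat}. \<bar>Bf m\<bar>)"
  have "Bf m \<le> G" if "m \<in> {1..4}" for m
  proof -
    have "\<bar>Bf m\<bar> \<le> (\<Sum>m\<in>{1..4::nat}. \<bar>Bf m\<bar>)" using that by (intro member_le_sum) auto
    then show ?thesis unfolding G_def by linarith
  qed
  moreover have "G > 0" unfolding G_def by (simp add: add_pos_nonneg sum_nonneg)
  ultimately show ?thesis using Bf by (intro exI[of _ G]) force
qed




lemma deriv_join: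
  fixes f :: "real \<Rightarrow> real"
  assumes l: "(f has_real_derivative D) (at x within {..x})" and r: "(f has_real_derivative D) (at x within {x..})"
  shows "(f has_real_derivative D) (at x)"
proof -
  have e1: "at x within {..x} = at_left x"
    by (rule at_within_nhd[where S=UNIV]) auto
  have e2: "at x within {x..} = at_right x"
    by (rule at_within_nhd[where S=UNIV]) auto
  show ?thesis using l r unfolding has_field_derivative_iff e1 e2 filterlim_at_split[symmetric]
    by (simp add: filterlim_at_split)
qed


lemma within_Ioc_at:
  fixes y :: real
  assumes "0 < y" "y < 1"
  shows "at y within {0<..1} = at y"
  by (rule at_within_open_subset[of _ "{0<..<1}"]) (use assms in auto)

lemma within_Ioc_1: "at (1::real) within {0<..1} = at 1 within {..1}"
  by (rule at_within_nhd[where S="{0<..}"]) auto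

lemma piece_deriv:
  fixes G H g G' H' g' :: "real \<Rightarrow> real" and \<Delta> c1 c2 :: real
  assumes D: "0 < \<Delta>" "\<Delta> < 1"
    and dG: "\<And>y. (G has_real_derivative G' y) (at y)"
    and dH: "\<And>y. (H has_real_derivative H' y) (at y)"
    and dg: "\<And>y. y \<in> {0<..1} \<Longrightarrow> (g has_real_derivative g' y) (at y within {0<..1})"
    and j1: "c1 = G (\<Delta>/2)" "G' (\<Delta>/2) = 0"
    and j2: "G \<Delta> = g \<Delta>" "G' \<Delta> = g' \<Delta>"
    and j3: "H 1 = g 1" "H' 1 = g' 1"
    and j4: "c2 = H 2" "H' 2 = 0"
  shows "((\<lambda>y. if y \<le> \<Delta>/2 then c1 else if y < \<Delta> then G y else if y \<le> 1 then g y else if y < 2 then H y else c2)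
     has_real_derivative
     (if x \<le> \<Delta>/2 then 0 else if x < \<Delta> then G' x else if x \<le> 1 then g' x else if x < 2 then H' x else 0)) (at x)"
  (is "(?F has_real_derivative _) _")
proof -
  consider "x < \<Delta>/2" | "x = \<Delta>/2" | "\<Delta>/2 < x \<and> x < \<Delta>" | "x = \<Delta>" | "\<Delta> < x \<and> x < 1" | "x = 1"
    | "1 < x \<and> x < 2" | "x = 2" | "2 < x" by linarith
  then show ?thesis
  proof cases
    case 1
    have "((\<lambda>y. c1) has_real_derivative 0) (at x)" by simp
    then have "(?F has_real_derivative 0) (at x)"
      by (rule has_field_derivative_transform_within_open[where S="{..<\<Delta>/2}"]) (use 1 D in \<open>auto simp: dist_real_def\<close>)
    then show ?thesis using 1 D by simp
  next
    case 2
    have l: "(?F has_real_derivative 0) (at x within {..x})"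
      by (rule has_field_derivative_transform_within[where f="\<lambda>y. c1" and d=1]) (use 2 D in \<open>auto simp: dist_real_def\<close>)
    have "(G has_real_derivative 0) (at x within {x..})"
      using dG[of x] j1 2 by (auto intro: has_field_derivative_at_within)
    then have r: "(?F has_real_derivative 0) (at x within {x..})"
      by (rule has_field_derivative_transform_within[where d="\<Delta>/2"]) (use 2 j1 D in \<open>auto simp: dist_real_def\<close>)
    have "x \<le> \<Delta>/2" using 2 by simp
    then show ?thesis using deriv_join[OF l r] by (subst if_P)
  next
    case 3
    have "(?F has_real_derivative G' x) (at x)"
      by (rule has_field_derivative_transform_within_open[OF dG, where S="{\<Delta>/2<..<\<Delta>}"]) (use 3 D in \<open>auto simp: dist_real_def\<close>)
    then show ?thesis using 3 D by simp
  next
    case 4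
    have "(G has_real_derivative G' x) (at x within {..x})" using dG by (auto intro: has_field_derivative_at_within)
    then have l: "(?F has_real_derivative G' x) (at x within {..x})"
      by (rule has_field_derivative_transform_within[where d="\<Delta>/2"]) (use 4 j2 D in \<open>auto simp: dist_real_def\<close>)
    have "(g has_real_derivative g' x) (at x)" using dg[of x] 4 D within_Ioc_at[of x] by auto
    then have "(g has_real_derivative G' x) (at x within {x..})" using j2 4 by (auto intro: has_field_derivative_at_within)
    then have r: "(?F has_real_derivative G' x) (at x within {x..})"
      by (rule has_field_derivative_transform_within[where d="1 - \<Delta>"]) (use 4 D in \<open>auto simp: dist_real_def\<close>)
    show ?thesis using deriv_join[OF l r] 4 D j2 by simp
  next
    case 5
    have "(g has_real_derivative g' x) (at x)" using dg[of x] 5 D within_Ioc_at[of x] by auto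
    then have "(?F has_real_derivative g' x) (at x)"
      by (rule has_field_derivative_transform_within_open[where S="{\<Delta><..<1}"]) (use 5 D in \<open>auto simp: dist_real_def\<close>)
    then show ?thesis using 5 D by simp
  next
    case 6
    have "(g has_real_derivative g' x) (at x within {..x})" using dg[of x] 6 within_Ioc_1 by auto
    then have l: "(?F has_real_derivative g' x) (at x within {..x})"
      by (rule has_field_derivative_transform_within[where d="1 - \<Delta>"]) (use 6 D in \<open>auto simp: dist_real_def\<close>)
    have "(H has_real_derivative g' x) (at x within {x..})" using dH[of x] j3 6 by (auto intro: has_field_derivative_at_within)
    then have r: "(?F has_real_derivative g' x) (at x within {x..})"
      by (rule has_field_derivative_transform_within[where d="1"]) (use 6 j3 D in \<open>auto simp: dist_real_def\<close>)
    show ?thesis using deriv_join[OF l r] 6 D by simp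
  next
    case 7
    have "(?F has_real_derivative H' x) (at x)"
      by (rule has_field_derivative_transform_within_open[OF dH, where S="{1<..<2}"]) (use 7 D in \<open>auto simp: dist_real_def\<close>)
    then show ?thesis using 7 D by simp
  next
    case 8
    have "(H has_real_derivative 0) (at x within {..x})" using dH[of x] j4 8 by (auto intro: has_field_derivative_at_within)
    then have l: "(?F has_real_derivative 0) (at x within {..x})"
      by (rule has_field_derivative_transform_within[where d="1"]) (use 8 j4 D in \<open>auto simp: dist_real_def\<close>)
    have r: "(?F has_real_derivative 0) (at x within {x..})"
      by (rule has_field_derivative_transform_within[where f="\<lambda>y. c2" and d=1]) (use 8 D in \<open>auto simp: dist_real_def\<close>)
    show ?thesis using deriv_join[OF l r] 8 D by simp
  next
    case 9
    have "((\<lambda>y. c2) has_real_derivative 0) (at x)" by simp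
    then have "(?F has_real_derivative 0) (at x)"
      by (rule has_field_derivative_transform_within_open[where S="{2<..}"]) (use 9 D in \<open>auto simp: dist_real_def\<close>)
    then show ?thesis using 9 D by simp
  qed
qed


definition D1 :: "(real \<Rightarrow> real) \<Rightarrow> real \<Rightarrow> real \<Rightarrow> real" where
  "D1 \<phi> \<Delta> x = (if x \<le> \<Delta>/2 then 0 else if x < \<Delta> then HL1 \<phi> \<Delta> (\<Delta>/2) x else if x \<le> 1 then phider 1 \<phi> x
     else if x < 2 then HL1 \<phi> 1 2 x else 0)"
definition D2 :: "(real \<Rightarrow> real) \<Rightarrow> real \<Rightarrow> real \<Rightarrow> real" where
  "D2 \<phi> \<Delta> x = (if x \<le> \<Delta>/2 then 0 else if x < \<Delta> then HL2 \<phi> \<Delta> (\<Delta>/2) x else if x \<le> 1 then phider 2 \<phi> x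
     else if x < 2 then HL2 \<phi> 1 2 x else 0)"

lemma phibar_D1:
  assumes D: "0 < \<Delta>" "\<Delta> < 1"
    and diff: "\<forall>k<4. \<forall>x\<in>{0<..1}.
        (phider k \<phi> has_vector_derivative phider (Suc k) \<phi> x) (at x within {0<..1})"
  shows "(phibar \<phi> \<Delta> has_real_derivative D1 \<phi> \<Delta> x) (at x)"
proof -
  have e: "phibar \<phi> \<Delta> = (\<lambda>y. if y \<le> \<Delta>/2 then HL 4 (\<Delta>/2) \<phi> \<Delta> (\<Delta>/2) else if y < \<Delta> then HL 4 y \<phi> \<Delta> (\<Delta>/2)
      else if y \<le> 1 then \<phi> y else if y < 2 then HL 4 y \<phi> 1 2 else HL 4 2 \<phi> 1 2)"
    by (rule ext) (simp add: phibar_def)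
  have n1: "\<Delta>/2 \<noteq> \<Delta>" using D by simp
  have dg: "\<And>y. y \<in> {0<..1} \<Longrightarrow> (\<phi> has_real_derivative phider 1 \<phi> y) (at y within {0<..1})"
    using diff by (auto simp: has_real_derivative_iff_has_vector_derivative dest!: spec[of _ 0])
  show ?thesis unfolding e D1_def
    by (rule piece_deriv[OF D HL_deriv HL_deriv dg]) (use HL_vals[OF n1] HL_vals[of 2 1] D in auto)
qed

lemma D1_D2:
  assumes D: "0 < \<Delta>" "\<Delta> < 1"
    and diff: "\<forall>k<4. \<forall>x\<in>{0<..1}.
        (phider k \<phi> has_vector_derivative phider (Suc k) \<phi> x) (at x within {0<..1})"
  shows "(D1 \<phi> \<Delta> has_real_derivative D2 \<phi> \<Delta> x) (at x)"
proof -
  have e: "D1 \<phi> \<Delta> = (\<lambda>y. if y \<le> \<Delta>/2 then 0 else if y < \<Delta> then HL1 \<phi> \<Delta> (\<Delta>/2) y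
      else if y \<le> 1 then phider 1 \<phi> y else if y < 2 then HL1 \<phi> 1 2 y else 0)"
    by (rule ext) (simp add: D1_def)
  have n1: "\<Delta>/2 \<noteq> \<Delta>" using D by simp
  have dg: "\<And>y. y \<in> {0<..1} \<Longrightarrow> (phider 1 \<phi> has_real_derivative phider 2 \<phi> y) (at y within {0<..1})"
    using diff by (auto simp: has_real_derivative_iff_has_vector_derivative numeral_2_eq_2 dest!: spec[of _ 1])
  show ?thesis unfolding e D2_def
    by (rule piece_deriv[OF D HL1_deriv HL1_deriv dg]) (use HL_vals[OF n1] HL_vals[of 2 1] D in auto)
qed




lemma term1:
  fixes a h d P A G \<alpha> :: real
  assumes "a > 0" "a/2 \<le> \<bar>h\<bar>" "\<bar>h\<bar> \<le> a" "\<bar>d\<bar> \<le> A * a powr (\<alpha> - real m)" "\<bar>P\<bar> \<le> G" "m \<ge> 1" "A \<ge> 0" "G \<ge> 0"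
  shows "\<bar>d / fact m * h^m * P / h\<bar> \<le> A*G*a powr (\<alpha>-1)"
proof -
  have h0: "h \<noteq> 0" using assms by auto
  have hm: "h^m = h * h^(m-1)" using assms(6) by (cases m) auto
  have "\<bar>d / fact m * h^m * P / h\<bar> = \<bar>d\<bar> / fact m * \<bar>h\<bar>^(m-1) * \<bar>P\<bar>"
    using h0 unfolding hm by (simp add: abs_mult power_abs)
  also have "\<dots> \<le> \<bar>d\<bar> * \<bar>h\<bar>^(m-1) * \<bar>P\<bar>"
  proof -
    have "\<bar>d\<bar> / fact m \<le> \<bar>d\<bar>" using fact_ge_1[of m] by (simp add: divide_le_eq mult_le_cancel_left1)
    then show ?thesis by (intro mult_right_mono) auto
  qed
  also have "\<dots> \<le> (A * a powr (\<alpha> - real m)) * a^(m-1) * G"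
    using assms by (intro mult_mono power_mono) auto
  also have "\<dots> = A*G*(a powr (\<alpha> - real m) * a^(m-1))" by (simp add: mult_ac)
  also have "a powr (\<alpha> - real m) * a^(m-1) = a powr (\<alpha> - 1)"
    using assms by (simp add: powr_realpow[symmetric] powr_add[symmetric] of_nat_diff)
  finally show ?thesis .
qed

lemma term2:
  fixes a h d P A G \<alpha> :: real
  assumes "a > 0" "a/2 \<le> \<bar>h\<bar>" "\<bar>h\<bar> \<le> a" "\<bar>d\<bar> \<le> A * a powr (\<alpha> - real m)" "\<bar>P\<bar> \<le> G" "m \<ge> 1" "A \<ge> 0" "G \<ge> 0"
  shows "\<bar>d / fact m * h^m * P / h^2\<bar> \<le> 2*A*G*a powr (\<alpha>-2)"
proof -
  have h0: "h \<noteq> 0" using assms by auto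
  have "\<bar>d / fact m * h^m * P / h^2\<bar> = \<bar>d\<bar> / fact m * (\<bar>h\<bar>^m / \<bar>h\<bar>^2) * \<bar>P\<bar>"
    using h0 by (simp add: abs_mult power_abs)
  also have "\<dots> \<le> \<bar>d\<bar> * (\<bar>h\<bar>^m / \<bar>h\<bar>^2) * \<bar>P\<bar>"
  proof -
    have "\<bar>d\<bar> / fact m \<le> \<bar>d\<bar>" using fact_ge_1[of m] by (simp add: divide_le_eq mult_le_cancel_left1)
    then show ?thesis by (intro mult_right_mono) auto
  qed
  also have "\<dots> \<le> (A * a powr (\<alpha> - real m)) * (2 * a powr (real m - 2)) * G"
  proof -
    have "\<bar>h\<bar>^m / \<bar>h\<bar>^2 \<le> 2 * a powr (real m - 2)"
    proof (cases "m = 1")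
      case True
      then have "\<bar>h\<bar>^m / \<bar>h\<bar>^2 = 1 / \<bar>h\<bar>" using h0 by (auto simp: power2_eq_square abs_if field_simps)
      also have "\<dots> \<le> 1 / (a/2)" using assms h0 by (intro divide_left_mono) auto
      also have "\<dots> = 2 * a powr (real m - 2)" using True assms by (simp add: powr_minus_divide)
      finally show ?thesis .
    next
      case False
      then have m2: "m \<ge> 2" using assms by simp
      then have "\<bar>h\<bar>^m / \<bar>h\<bar>^2 = \<bar>h\<bar>^(m-2)" using h0 by (simp add: power_diff)
      also have "\<dots> \<le> a^(m-2)" using assms by (intro power_mono) auto
      also have "\<dots> = a powr (real m - 2)" using assms m2 by (simp add: powr_realpow[symmetric] of_nat_diff)
      also have "\<dots> \<le> 2 * a powr (real m - 2)" by simp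
      finally show ?thesis .
    qed
    then show ?thesis using assms by (intro mult_mono) auto
  qed
  also have "a powr (\<alpha> - real m) * a powr (real m - 2) = a powr (\<alpha> - 2)"
    using assms by (simp add: powr_add[symmetric])
  then have "(A * a powr (\<alpha> - real m)) * (2 * a powr (real m - 2)) * G = 2*A*G*a powr (\<alpha>-2)"
    by (metis (no_types, opaque_lifting) mult.assoc mult.commute)
  finally show ?thesis .
qed


lemma HL_bounds:
  fixes a b x A G \<alpha> :: real
  assumes a: "a > 0" "a/2 \<le> \<bar>b-a\<bar>" "\<bar>b-a\<bar> \<le> a" and t: "0 \<le> (x-a)/(b-a)" "(x-a)/(b-a) \<le> 1"
    and AG: "A \<ge> 0" "G \<ge> 0"
    and Ab: "\<forall>m\<in>{1..4}. \<bar>phider m \<phi> a\<bar> \<le> A * a powr (\<alpha> - real m)"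
    and Gb: "\<forall>m\<in>{1..4}. \<forall>t\<in>{0..1}. \<bar>poly (pderiv (Pp m)) t\<bar> \<le> G \<and> \<bar>poly (pderiv (pderiv (Pp m))) t\<bar> \<le> G"
  shows "\<bar>HL1 \<phi> a b x\<bar> \<le> 4 * (A*G*a powr (\<alpha>-1))" "\<bar>HL2 \<phi> a b x\<bar> \<le> 4 * (2*A*G*a powr (\<alpha>-2))"
proof -
  have "\<bar>HL1 \<phi> a b x\<bar> \<le> (\<Sum>m=1..4. \<bar>phider m \<phi> a / fact m * (b-a)^m * poly (pderiv (Pp m)) ((x-a)/(b-a)) / (b-a)\<bar>)"
    unfolding HL1_def by (rule sum_abs)
  also have "\<dots> \<le> real (card {1..4::nat}) * (A*G*a powr (\<alpha>-1))"
    by (rule sum_bounded_above, rule term1) (use a t AG Ab Gb in auto)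
  finally show "\<bar>HL1 \<phi> a b x\<bar> \<le> 4 * (A*G*a powr (\<alpha>-1))" by simp
  have "\<bar>HL2 \<phi> a b x\<bar> \<le> (\<Sum>m=1..4. \<bar>phider m \<phi> a / fact m * (b-a)^m * poly (pderiv (pderiv (Pp m))) ((x-a)/(b-a)) / (b-a)^2\<bar>)"
    unfolding HL2_def by (rule sum_abs)
  also have "\<dots> \<le> real (card {1..4::nat}) * (2*A*G*a powr (\<alpha>-2))"
    by (rule sum_bounded_above, rule term2) (use a t AG Ab Gb in auto)
  finally show "\<bar>HL2 \<phi> a b x\<bar> \<le> 4 * (2*A*G*a powr (\<alpha>-2))" by simp
qed


lemma D_bounds:
  fixes \<alpha> \<Delta> A G y :: real
  assumes alpha: "0 < \<alpha>" "\<alpha> < 1" and D: "0 < \<Delta>" "\<Delta> < 1" and AG: "A > 0" "G > 0"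
    and Ab: "\<forall>m\<in>{1..4}. \<forall>x\<in>{0<..1}. \<bar>phider m \<phi> x\<bar> \<le> A * x powr (\<alpha> - real m)"
    and Gb: "\<forall>m\<in>{1..4}. \<forall>t\<in>{0..1}. \<bar>poly (pderiv (Pp m)) t\<bar> \<le> G \<and> \<bar>poly (pderiv (pderiv (Pp m))) t\<bar> \<le> G"
    and y: "y \<ge> 0"
  shows "\<bar>D1 \<phi> \<Delta> y\<bar> \<le> (64*A*G + A) * max y \<Delta> powr (\<alpha>-1)"
    "\<bar>y * D2 \<phi> \<Delta> y\<bar> \<le> (64*A*G + A) * max y \<Delta> powr (\<alpha>-1)"
proof -
  define K where "K = 64*A*G + A"
  have K0: "K \<ge> 0" unfolding K_def using AG by simp
  have mp: "max y \<Delta> powr (\<alpha>-1) > 0" using D by simp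
  consider "y \<le> \<Delta>/2" | "\<Delta>/2 < y \<and> y < \<Delta>" | "\<Delta> \<le> y \<and> y \<le> 1" | "1 < y \<and> y < 2" | "2 \<le> y" by linarith
  then have "\<bar>D1 \<phi> \<Delta> y\<bar> \<le> K * max y \<Delta> powr (\<alpha>-1) \<and> \<bar>y * D2 \<phi> \<Delta> y\<bar> \<le> K * max y \<Delta> powr (\<alpha>-1)"
  proof cases
    case 1 then show ?thesis using K0 mp by (simp add: D1_def D2_def)
  next
    case 2
    have Ab': "\<forall>m\<in>{1..4}. \<bar>phider m \<phi> \<Delta>\<bar> \<le> A * \<Delta> powr (\<alpha> - real m)" using Ab D by auto
    have t: "0 \<le> (y-\<Delta>)/(\<Delta>/2-\<Delta>)" "(y-\<Delta>)/(\<Delta>/2-\<Delta>) \<le> 1" using 2 D by (auto simp: field_simps)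
    note hb = HL_bounds[of \<Delta> "\<Delta>/2" y A G \<phi> \<alpha>, OF D(1) _ _ t _ _ Ab' Gb]
    have m: "max y \<Delta> = \<Delta>" using 2 by simp
    have b1: "\<bar>HL1 \<phi> \<Delta> (\<Delta>/2) y\<bar> \<le> 4 * (A*G*\<Delta> powr (\<alpha>-1))" using hb D AG by auto
    have b2: "\<bar>HL2 \<phi> \<Delta> (\<Delta>/2) y\<bar> \<le> 4 * (2*A*G*\<Delta> powr (\<alpha>-2))" using hb D AG by auto
    have "\<bar>y * HL2 \<phi> \<Delta> (\<Delta>/2) y\<bar> \<le> \<Delta> * (4 * (2*A*G*\<Delta> powr (\<alpha>-2)))"
      unfolding abs_mult using b2 2 y by (intro mult_mono) auto
    also have "\<Delta> * (4 * (2*A*G*\<Delta> powr (\<alpha>-2))) = 8*A*G*(\<Delta> * \<Delta> powr (\<alpha>-2))" by simp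
    also have "\<Delta> * \<Delta> powr (\<alpha>-2) = \<Delta> powr (\<alpha>-1)" using D by (simp add: powr_mult_base)
    finally have b2': "\<bar>y * HL2 \<phi> \<Delta> (\<Delta>/2) y\<bar> \<le> 8*A*G*\<Delta> powr (\<alpha>-1)" .
    have "(4*A*G) * \<Delta> powr (\<alpha>-1) \<le> K * \<Delta> powr (\<alpha>-1)" "(8*A*G) * \<Delta> powr (\<alpha>-1) \<le> K * \<Delta> powr (\<alpha>-1)"
      unfolding K_def using AG by (intro mult_right_mono; simp)+
    then have i: "4 * (A*G*\<Delta> powr (\<alpha>-1)) \<le> K * \<Delta> powr (\<alpha>-1)" "8*A*G*\<Delta> powr (\<alpha>-1) \<le> K * \<Delta> powr (\<alpha>-1)"
      by (simp_all add: mult_ac)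
    have "\<bar>D1 \<phi> \<Delta> y\<bar> = \<bar>HL1 \<phi> \<Delta> (\<Delta>/2) y\<bar>" "\<bar>y * D2 \<phi> \<Delta> y\<bar> = \<bar>y * HL2 \<phi> \<Delta> (\<Delta>/2) y\<bar>"
      using 2 by (simp_all add: D1_def D2_def)
    then show ?thesis using order.trans[OF b1 i(1)] order.trans[OF b2' i(2)] unfolding m by simp
  next
    case 3
    have m: "max y \<Delta> = y" using 3 by simp
    have y0: "y \<in> {0<..1}" using 3 D by auto
    have b1: "\<bar>phider 1 \<phi> y\<bar> \<le> A * y powr (\<alpha>-1)" using bspec[OF bspec[OF Ab, of 1] y0] by simp
    have b2: "\<bar>phider 2 \<phi> y\<bar> \<le> A * y powr (\<alpha>-2)" using bspec[OF bspec[OF Ab, of 2] y0] by simp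
    have "\<bar>y * phider 2 \<phi> y\<bar> \<le> y * (A * y powr (\<alpha>-2))" unfolding abs_mult using b2 y by (intro mult_mono) auto
    also have "\<dots> = A * (y * y powr (\<alpha>-2))" by simp
    also have "y * y powr (\<alpha>-2) = y powr (\<alpha>-1)" using y0 by (simp add: powr_mult_base)
    finally have b2': "\<bar>y * phider 2 \<phi> y\<bar> \<le> A * y powr (\<alpha>-1)" .
    have i: "A * y powr (\<alpha>-1) \<le> K * y powr (\<alpha>-1)" unfolding K_def using AG by (intro mult_right_mono) auto
    have "\<bar>D1 \<phi> \<Delta> y\<bar> = \<bar>phider 1 \<phi> y\<bar>" "\<bar>y * D2 \<phi> \<Delta> y\<bar> = \<bar>y * phider 2 \<phi> y\<bar>"
      using 3 D by (simp_all add: D1_def D2_def)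
    then show ?thesis using order.trans[OF b1 i] order.trans[OF b2' i] unfolding m by simp
  next
    case 4
    have Ab': "\<forall>m\<in>{1..4}. \<bar>phider m \<phi> 1\<bar> \<le> A * 1 powr (\<alpha> - real m)"
    proof
      fix m :: nat assume "m \<in> {1..4}"
      then show "\<bar>phider m \<phi> 1\<bar> \<le> A * 1 powr (\<alpha> - real m)" using bspec[OF bspec[OF Ab \<open>m \<in> _\<close>], of 1] by simp
    qed
    have t: "0 \<le> (y-1)/(2-1)" "(y-1)/(2-1) \<le> (1::real)" using 4 by auto
    note hb = HL_bounds[of 1 2 y A G \<phi> \<alpha>, OF _ _ _ t _ _ Ab' Gb]
    have m: "max y \<Delta> = y" using 4 D by simp
    have b1: "\<bar>HL1 \<phi> 1 2 y\<bar> \<le> 4*A*G" using hb AG by auto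
    have b2: "\<bar>HL2 \<phi> 1 2 y\<bar> \<le> 8*A*G" using hb AG by auto
    have b2': "\<bar>y * HL2 \<phi> 1 2 y\<bar> \<le> 2 * (8*A*G)" unfolding abs_mult using b2 4 by (intro mult_mono) auto
    have yp: "y powr (\<alpha>-1) \<ge> 1/2"
    proof -
      have "2 powr (\<alpha>-1) \<le> y powr (\<alpha>-1)" using 4 alpha by (intro powr_mono2') auto
      moreover have "2 powr (-1) \<le> 2 powr (\<alpha>-1)" using alpha by (intro powr_mono) auto
      ultimately show ?thesis by (simp add: powr_minus_divide)
    qed
    have "32*A*G \<le> K * y powr (\<alpha>-1)"
    proof -
      have "32*A*G \<le> K * (1/2)" unfolding K_def using AG by simp
      also have "\<dots> \<le> K * y powr (\<alpha>-1)" using yp K0 by (intro mult_left_mono) auto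
      finally show ?thesis .
    qed
    moreover have "4*A*G \<le> 32*A*G" "16*A*G \<le> 32*A*G" using AG by (intro mult_right_mono; simp)+
    ultimately have i: "4*A*G \<le> K * y powr (\<alpha>-1)" "2 * (8*A*G) \<le> K * y powr (\<alpha>-1)" by auto
    have "\<bar>D1 \<phi> \<Delta> y\<bar> = \<bar>HL1 \<phi> 1 2 y\<bar>" "\<bar>y * D2 \<phi> \<Delta> y\<bar> = \<bar>y * HL2 \<phi> 1 2 y\<bar>"
      using 4 D by (simp_all add: D1_def D2_def)
    then show ?thesis using order.trans[OF b1 i(1)] order.trans[OF b2' i(2)] unfolding m by simp
  next
    case 5 then show ?thesis using K0 mp D by (simp add: D1_def D2_def)
  qed
  then show "\<bar>D1 \<phi> \<Delta> y\<bar> \<le> (64*A*G + A) * max y \<Delta> powr (\<alpha>-1)"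
    "\<bar>y * D2 \<phi> \<Delta> y\<bar> \<le> (64*A*G + A) * max y \<Delta> powr (\<alpha>-1)" unfolding K_def by auto
qed




lemma exp_cube: "x \<ge> 0 \<Longrightarrow> x^3 / 6 \<le> exp (x::real)"
proof -
  assume x: "x \<ge> 0"
  have "(\<Sum>k\<in>{3}. x^k / fact k) \<le> (\<Sum>k. x^k / fact k)"
    by (rule sum_le_suminf) (use exp_sums[of x] x in \<open>auto simp: sums_iff\<close>)
  also have "\<dots> = exp x" using exp_sums[of x] by (simp add: sums_iff)
  finally show ?thesis by (simp add: fact_numeral)
qed

lemma L_T:
  fixes \<alpha> l c :: real
  assumes alpha: "0 < \<alpha>" "\<alpha> < 1" and l: "l > 0" and c: "c > 0"
  shows "l powr (3 - 2*\<alpha>) * exp (-c * l) \<le> 1 + 6/c^3"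
proof (cases "l \<le> 1")
  case True
  have "l powr (3 - 2*\<alpha>) \<le> 1" using True l alpha by (intro powr_le1) auto
  moreover have "exp (-c*l) \<le> 1" using c l by simp
  ultimately have "l powr (3 - 2*\<alpha>) * exp (-c*l) \<le> 1 * 1"
    by (intro mult_mono) auto
  then have "l powr (3 - 2*\<alpha>) * exp (-c*l) \<le> 1" by simp
  moreover have "0 \<le> 6/c^3" using c by simp
  ultimately show ?thesis by linarith
next
  case False
  have "l powr (3 - 2*\<alpha>) \<le> l powr 3" using False alpha by (intro powr_mono) auto
  also have "\<dots> = l^3" using powr_realpow[OF l, of 3] by simp
  finally have a: "l powr (3 - 2*\<alpha>) \<le> l^3" .
  have "(c*l)^3/6 \<le> exp (c*l)" using c l by (intro exp_cube) auto
  then have b0: "l^3 * c^3 \<le> 6 * exp (c*l)" by (simp add: power_mult_distrib mult.commute)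
  have E: "exp (c*l) > 0" by simp
  have "l^3 \<le> 6 * exp (c*l) / c^3" using b0 c by (simp add: pos_le_divide_eq)
  then have "l^3 / exp (c*l) \<le> 6 / c^3" using E by (simp add: pos_divide_le_eq mult.commute)
  then have b: "l^3 * exp (-c*l) \<le> 6/c^3" by (simp add: exp_minus divide_inverse)
  have "l powr (3 - 2*\<alpha>) * exp (-c*l) \<le> l^3 * exp (-c*l)"
    using a by (intro mult_right_mono) auto
  also have "\<dots> \<le> 6/c^3" by (rule b)
  finally show ?thesis by simp
qed


lemma sq_powr: "((x::real) powr a)^2 = x powr (2*a)"
  unfolding power2_eq_square mult_2 by (rule powr_add[symmetric])

lemma idt3: "p > 0 \<Longrightarrow> N > 0 \<Longrightarrow> (K::real)^2*(4 * X)/(2*N^2) = 2*K^2 * ((X * p)/N) / (N * p)"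
  by (simp add: field_simps power2_eq_square)

lemma L_final:
  fixes \<alpha> K c0 \<Delta> p :: real and n :: nat
  assumes alpha: "0 < \<alpha>" "\<alpha> < 1" and K: "K > 0" and c0: "c0 > 0" and n: "n \<ge> 1"
    and D: "c0 / real n \<le> \<Delta>" "\<Delta> < p" "p \<le> 1"
  shows "2*K^2*((p/2) powr (\<alpha>-1))^2 * (p/real n)
     + (2*K^2*(\<Delta> powr (\<alpha>-1))^2*p^2 + K^2*(\<Delta> powr (\<alpha>-1))^2/(2*(real n)^2)) * (2 powr (real n * p/2) * exp (-(real n * p)/2))
     + K^2*((p/2) powr (\<alpha>-1))^2/(2*(real n)^2)
   \<le> (8*K^2 + 2*K^2/c0 + K^2*(2 + 1/(2*c0^2)) * c0 powr (2*\<alpha>-2) * (1 + 6/((1 - ln 2)/2)^3)) * (p powr (2*\<alpha>-1) / real n)"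
proof -
  define N where "N = real n"
  define l where "l = N * p"
  define cc :: real where "cc = (1 - ln 2)/2"
  define Pa where "Pa = p powr (2*\<alpha>-1) / N"
  have N: "N \<ge> 1" unfolding N_def using n by simp
  have "c0 / N > 0" using c0 N by simp
  then have Dp: "\<Delta> > 0" using D unfolding N_def[symmetric] by linarith
  have p0: "p > 0" using Dp D by simp
  have l0: "l > 0" unfolding l_def using N p0 by simp
  have cc: "cc > 0" unfolding cc_def using ln_2_less_1 by simp
  have lc0: "l \<ge> c0"
  proof -
    have "c0 \<le> N * \<Delta>" using D(1) N unfolding N_def[symmetric] by (simp add: divide_le_eq mult.commute)
    also have "\<dots> \<le> N * p" using D N by simp
    finally show ?thesis unfolding l_def .
  qed
  have Pa0: "Pa > 0" unfolding Pa_def using p0 N by simp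
  have s1: "((p/2) powr (\<alpha>-1))^2 \<le> 4 * p powr (2*\<alpha>-2)"
  proof -
    have e2: "2*(\<alpha>-1) = 2*\<alpha>-2" by simp
    have a1: "((p/2) powr (\<alpha>-1))^2 = (p/2) powr (2*\<alpha>-2)"
      using sq_powr[of "p/2" "\<alpha>-1"] unfolding e2 .
    have a2: "(p/2) powr (2*\<alpha>-2) = p powr (2*\<alpha>-2) / 2 powr (2*\<alpha>-2)"
      using p0 by (simp add: powr_divide)
    have a3: "1 / 2 powr (2*\<alpha>-2) = (2::real) powr (2-2*\<alpha>)"
      using powr_minus_divide[of "2::real" "2*\<alpha>-2"] by simp
    have a4: "(2::real) powr (2-2*\<alpha>) \<le> 2 powr 2" using alpha by (intro powr_mono) auto
    have "((p/2) powr (\<alpha>-1))^2 = p powr (2*\<alpha>-2) * (1 / 2 powr (2*\<alpha>-2))"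
      unfolding a1 a2 by simp
    also have "\<dots> = p powr (2*\<alpha>-2) * 2 powr (2-2*\<alpha>)" unfolding a3 ..
    also have "\<dots> \<le> p powr (2*\<alpha>-2) * 4" using a4 by (intro mult_left_mono) auto
    finally show ?thesis by simp
  qed
  have s4: "p powr (2*\<alpha>-2) * p = p powr (2*\<alpha>-1)"
    using p0 by (simp add: powr_mult_base mult.commute)
  have s2: "(\<Delta> powr (\<alpha>-1))^2 \<le> c0 powr (2*\<alpha>-2) * N powr (2-2*\<alpha>)"
  proof -
    have e2: "2*(\<alpha>-1) = 2*\<alpha>-2" by simp
    have a1: "(\<Delta> powr (\<alpha>-1))^2 = \<Delta> powr (2*\<alpha>-2)"
      using sq_powr[of "\<Delta>" "\<alpha>-1"] unfolding e2 .
    have a2: "\<Delta> powr (2*\<alpha>-2) \<le> (c0/N) powr (2*\<alpha>-2)" using alpha D c0 N unfolding N_def[symmetric]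
      by (intro powr_mono2') auto
    have a3: "(c0/N) powr (2*\<alpha>-2) = c0 powr (2*\<alpha>-2) / N powr (2*\<alpha>-2)"
      using c0 N by (simp add: powr_divide)
    have a4: "1 / N powr (2*\<alpha>-2) = N powr (2-2*\<alpha>)"
      using powr_minus_divide[of N "2*\<alpha>-2"] by simp
    have "(c0/N) powr (2*\<alpha>-2) = c0 powr (2*\<alpha>-2) * (1 / N powr (2*\<alpha>-2))" unfolding a3 by simp
    then have "(c0/N) powr (2*\<alpha>-2) = c0 powr (2*\<alpha>-2) * N powr (2-2*\<alpha>)" unfolding a4 .
    then show ?thesis using a1 a2 by simp
  qed
  have s3: "2 powr (l/2) * exp (-l/2) = exp (-cc*l)"
  proof -
    have "(2::real) powr (l/2) = exp (l/2 * ln 2)" by (simp add: powr_def)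
    then have "2 powr (l/2) * exp (-l/2) = exp (l/2 * ln 2 + -l/2)" using exp_add[of "l/2*ln 2" "-l/2"] by simp
    also have "l/2 * ln 2 + -l/2 = -cc*l" unfolding cc_def by (simp add: field_simps)
    finally show ?thesis .
  qed
  have T0: "exp (-cc*l) \<ge> 0" by simp
  have t1: "2*K^2*((p/2) powr (\<alpha>-1))^2 * (p/N) \<le> 8*K^2 * Pa"
  proof -
    have "2*K^2*((p/2) powr (\<alpha>-1))^2 * (p/N) \<le> 2*K^2*(4 * p powr (2*\<alpha>-2)) * (p/N)"
      using s1 K p0 N by (intro mult_right_mono mult_left_mono) auto
    also have "\<dots> = 8*K^2 * ((p powr (2*\<alpha>-2) * p)/N)" by simp
    finally show ?thesis unfolding s4 Pa_def .
  qed
  have t3: "K^2*((p/2) powr (\<alpha>-1))^2/(2*N^2) \<le> 2*K^2/c0 * Pa"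
  proof -
    have "K^2*((p/2) powr (\<alpha>-1))^2/(2*N^2) \<le> K^2*(4 * p powr (2*\<alpha>-2))/(2*N^2)"
      using s1 K N by (intro divide_right_mono mult_left_mono) auto
    also have "\<dots> = 2*K^2 * ((p powr (2*\<alpha>-2) * p)/N) / l"
      unfolding l_def using p0 N by (rule_tac idt3) auto
    also have "\<dots> \<le> 2*K^2 * ((p powr (2*\<alpha>-2) * p)/N) / c0"
      using lc0 c0 K p0 N by (intro divide_left_mono) auto
    also have "\<dots> = 2*K^2/c0 * ((p powr (2*\<alpha>-2) * p)/N)" by simp
    finally show ?thesis unfolding s4 Pa_def .
  qed
  have np: "1/N^2 \<le> p^2/c0^2"
  proof -
    have "1/N \<le> p/c0" using lc0 N c0 unfolding l_def by (simp add: field_simps)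
    then have "(1/N)^2 \<le> (p/c0)^2" using N by (intro power_mono) auto
    then show ?thesis by (simp add: power_divide)
  qed
  define Q where "Q = (\<Delta> powr (\<alpha>-1))^2"
  have Q0: "Q \<ge> 0" unfolding Q_def by simp
  have co: "2*K^2*Q*p^2 + K^2*Q/(2*N^2) \<le> K^2*(2 + 1/(2*c0^2)) * (Q * p^2)"
  proof -
    have "K^2*Q/(2*N^2) = K^2*Q/2 * (1/N^2)" by simp
    also have "\<dots> \<le> K^2*Q/2 * (p^2/c0^2)" using np K Q0 by (intro mult_left_mono) auto
    finally show ?thesis by (simp add: algebra_simps)
  qed
  have key: "Q * p^2 * exp (-cc*l) \<le> c0 powr (2*\<alpha>-2) * (1 + 6/cc^3) * Pa"
  proof -
    have "Q * p^2 * exp (-cc*l) \<le> (c0 powr (2*\<alpha>-2) * N powr (2-2*\<alpha>)) * p^2 * exp (-cc*l)"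
      using s2 unfolding Q_def by (intro mult_right_mono) auto
    also have "N powr (2-2*\<alpha>) * p^2 = l powr (3 - 2*\<alpha>) * Pa"
    proof -
      have "l powr (3 - 2*\<alpha>) = N powr (3-2*\<alpha>) * p powr (3-2*\<alpha>)" unfolding l_def using N p0 by (simp add: powr_mult)
      moreover have "N powr (3-2*\<alpha>) = N powr (2-2*\<alpha>) * N"
      proof -
        have "N powr (3-2*\<alpha>) = N powr ((2-2*\<alpha>) + 1)" by simp
        also have "\<dots> = N powr (2-2*\<alpha>) * N powr 1" by (rule powr_add)
        finally show ?thesis using N by simp
      qed
      moreover have "p powr (3-2*\<alpha>) * p powr (2*\<alpha>-1) = p^2" using p0 by (simp add: powr_add[symmetric])
      ultimately show ?thesis unfolding Pa_def using N by (simp add: field_simps)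
    qed
    then have "(c0 powr (2*\<alpha>-2) * N powr (2-2*\<alpha>)) * p^2 * exp (-cc*l) = c0 powr (2*\<alpha>-2) * Pa * (l powr (3 - 2*\<alpha>) * exp (-cc*l))"
      by (simp add: algebra_simps)
    also have "\<dots> \<le> c0 powr (2*\<alpha>-2) * Pa * (1 + 6/cc^3)"
      using L_T[OF alpha l0 cc] Pa0 by (intro mult_left_mono) auto
    finally show ?thesis by (simp add: algebra_simps)
  qed
  have t2: "(2*K^2*Q*p^2 + K^2*Q/(2*N^2)) * exp (-cc*l) \<le> K^2*(2 + 1/(2*c0^2)) * c0 powr (2*\<alpha>-2) * (1 + 6/cc^3) * Pa"
  proof -
    have "(2*K^2*Q*p^2 + K^2*Q/(2*N^2)) * exp (-cc*l) \<le> (K^2*(2 + 1/(2*c0^2)) * (Q * p^2)) * exp (-cc*l)"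
      using co by (intro mult_right_mono) auto
    also have "\<dots> = K^2*(2 + 1/(2*c0^2)) * (Q * p^2 * exp (-cc*l))" by simp
    also have "\<dots> \<le> K^2*(2 + 1/(2*c0^2)) * (c0 powr (2*\<alpha>-2) * (1 + 6/cc^3) * Pa)"
      using key K c0 by (intro mult_left_mono) (auto intro: add_nonneg_nonneg)
    finally show ?thesis by (simp only: mult.assoc)
  qed
  have "2*K^2*((p/2) powr (\<alpha>-1))^2 * (p/N)
     + (2*K^2*Q*p^2 + K^2*Q/(2*N^2)) * exp (-cc*l)
     + K^2*((p/2) powr (\<alpha>-1))^2/(2*N^2)
     \<le> 8*K^2 * Pa + K^2*(2 + 1/(2*c0^2)) * c0 powr (2*\<alpha>-2) * (1 + 6/cc^3) * Pa + 2*K^2/c0 * Pa"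
    using t1 t2 t3 by linarith
  also have "\<dots> = (8*K^2 + 2*K^2/c0 + K^2*(2 + 1/(2*c0^2)) * c0 powr (2*\<alpha>-2) * (1 + 6/cc^3)) * Pa"
    by (simp add: algebra_simps)
  finally have fin: "2*K^2*((p/2) powr (\<alpha>-1))^2 * (p/N)
     + (2*K^2*Q*p^2 + K^2*Q/(2*N^2)) * exp (-cc*l)
     + K^2*((p/2) powr (\<alpha>-1))^2/(2*N^2)
     \<le> (8*K^2 + 2*K^2/c0 + K^2*(2 + 1/(2*c0^2)) * c0 powr (2*\<alpha>-2) * (1 + 6/cc^3)) * Pa" .
  have e: "2 powr (real n * p/2) * exp (-(real n * p)/2) = exp (-cc*l)"
    using s3 unfolding l_def N_def by simp
  show ?thesis unfolding e unfolding Q_def[symmetric] N_def[symmetric] cc_def[symmetric] using fin unfolding Pa_def by simp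
qed




lemma var_le:
  fixes f :: "'a \<Rightarrow> real"
  assumes B: "\<And>x. \<bar>f x\<bar> \<le> B"
  shows "measure_pmf.variance M f \<le> measure_pmf.expectation M (\<lambda>x. (f x - c)^2)"
proof -
  define E where "E = measure_pmf.expectation M f"
  have intf: "integrable (measure_pmf M) f"
    by (rule measure_pmf.integrable_const_bound[where B=B]) (use B in auto)
  have int2: "integrable (measure_pmf M) (\<lambda>x. (f x - E)^2)"
  proof (rule measure_pmf.integrable_const_bound[where B="(B + \<bar>E\<bar>)^2"])
    show "AE x in measure_pmf M. norm ((f x - E)^2) \<le> (B + \<bar>E\<bar>)^2"
    proof (rule AE_I2)
      fix x
      have "\<bar>f x - E\<bar> \<le> B + \<bar>E\<bar>" using B[of x] by linarith
      then have "\<bar>f x - E\<bar>^2 \<le> (B + \<bar>E\<bar>)^2" by (intro power_mono) auto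
      then show "norm ((f x - E)^2) \<le> (B + \<bar>E\<bar>)^2" by simp
    qed
  qed simp
  have eq: "(\<lambda>x. (f x - c)^2) = (\<lambda>x. (f x - E)^2 + (2*(E - c)) * (f x - E) + (E - c)^2)"
    by (rule ext) (simp add: power2_eq_square algebra_simps)
  have "measure_pmf.expectation M (\<lambda>x. (f x - c)^2)
      = measure_pmf.expectation M (\<lambda>x. (f x - E)^2) + (2*(E - c)) * measure_pmf.expectation M (\<lambda>x. f x - E) + (E - c)^2"
    unfolding eq using int2 intf
    by (simp add: Bochner_Integration.integral_add Bochner_Integration.integral_diff
        Bochner_Integration.integrable_diff Bochner_Integration.integral_mult_right)
  also have "measure_pmf.expectation M (\<lambda>x. f x - E) = 0"
    using intf unfolding E_def by (simp add: Bochner_Integration.integral_diff)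
  finally show ?thesis unfolding E_def by simp
qed

lemma mvt_bound:
  fixes F F' :: "real \<Rightarrow> real" and K \<alpha> \<Delta> x p :: real
  assumes der: "\<And>y. (F has_real_derivative F' y) (at y)"
    and bd: "\<And>y. y \<ge> 0 \<Longrightarrow> \<bar>F' y\<bar> \<le> K * max y \<Delta> powr (\<alpha>-1)"
    and K: "K \<ge> 0" and alpha: "\<alpha> < 1" and D: "\<Delta> > 0" and x: "x \<ge> 0" and p: "p \<ge> 0"
  shows "\<bar>F x - F p\<bar> \<le> K * max (min x p) \<Delta> powr (\<alpha>-1) * \<bar>x - p\<bar>"
proof (cases "x = p")
  case True then show ?thesis by simp
next
  case False
  define lo where "lo = min x p"
  define hi where "hi = max x p"
  have lh: "lo < hi" using False unfolding lo_def hi_def by auto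
  obtain z where z: "lo < z" "z < hi" "F hi - F lo = (hi - lo) * F' z"
    using MVT2[OF lh, of F F'] der by blast
  have lo0: "lo \<ge> 0" unfolding lo_def using x p by simp
  have "\<bar>F' z\<bar> \<le> K * max z \<Delta> powr (\<alpha>-1)" using bd[of z] z lo0 by simp
  also have "\<dots> \<le> K * max lo \<Delta> powr (\<alpha>-1)"
    using z alpha D K by (intro mult_left_mono powr_mono2') auto
  finally have fz: "\<bar>F' z\<bar> \<le> K * max lo \<Delta> powr (\<alpha>-1)" .
  have "\<bar>F x - F p\<bar> = \<bar>F hi - F lo\<bar>" unfolding lo_def hi_def by (cases "x \<le> p") (auto simp: abs_minus_commute)
  also have "\<dots> = (hi - lo) * \<bar>F' z\<bar>" using z lh by (simp add: abs_mult)
  also have "\<dots> \<le> (hi - lo) * (K * max lo \<Delta> powr (\<alpha>-1))" using fz lh by (intro mult_left_mono) auto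
  also have "hi - lo = \<bar>x - p\<bar>" unfolding lo_def hi_def by auto
  finally show ?thesis unfolding lo_def by (simp add: mult_ac)
qed


lemma sq_le_of_abs: "\<bar>a\<bar> \<le> (b::real) \<Longrightarrow> a^2 \<le> b^2"
  by (metis abs_ge_zero abs_le_square_iff abs_of_nonneg order_trans power2_abs)

lemma pointwise:
  fixes U V W x p \<Delta> K \<alpha> R :: real and n :: nat
  assumes hU: "\<bar>U\<bar> \<le> K * max (min x p) \<Delta> powr (\<alpha>-1) * \<bar>x - p\<bar>"
    and hW: "\<bar>W\<bar> \<le> K * max x \<Delta> powr (\<alpha>-1)" and V: "V = W / (2 * real n)"
    and x: "x \<ge> 0" and p: "p > 0" and D: "\<Delta> > 0" and alpha: "\<alpha> < 1" and K: "K \<ge> 0" and n: "n \<ge> 1"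
    and R: "R \<ge> 0" "x < p/2 \<Longrightarrow> R \<ge> 1"
  shows "(U - V)^2 \<le> 2*K^2*((p/2) powr (\<alpha>-1))^2 * (x-p)^2
     + (2*K^2*(\<Delta> powr (\<alpha>-1))^2*p^2 + K^2*(\<Delta> powr (\<alpha>-1))^2/(2*(real n)^2)) * R
     + K^2*((p/2) powr (\<alpha>-1))^2/(2*(real n)^2)"
proof -
  define P1 where "P1 = (p/2) powr (\<alpha>-1)"
  define q where "q = \<Delta> powr (\<alpha>-1)"
  have n0: "real n > 0" using n by simp
  have q0: "q > 0" unfolding q_def using D by simp
  have P10: "P1 > 0" unfolding P1_def using p by simp
  have s: "(U - V)^2 \<le> 2*U^2 + 2*V^2"
  proof -
    have "0 \<le> (U + V)^2" by simp
    then show ?thesis by (simp add: power2_eq_square algebra_simps)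
  qed
  have V2: "V^2 = W^2 / (4 * (real n)^2)" unfolding V by (simp add: power_divide power_mult_distrib)
  have Q0: "(2*K^2*q^2*p^2 + K^2*q^2/(2*(real n)^2)) \<ge> 0" by simp
  show ?thesis
  proof (cases "x \<ge> p/2")
    case True
    have m: "max (min x p) \<Delta> powr (\<alpha>-1) \<le> P1" unfolding P1_def
      using True p alpha by (intro powr_mono2') auto
    have "\<bar>U\<bar> \<le> K * P1 * \<bar>x - p\<bar>"
      using hU m K by (meson abs_ge_zero mult_left_mono mult_right_mono order_trans)
    then have U2: "U^2 \<le> (K * P1 * \<bar>x - p\<bar>)^2" by (rule sq_le_of_abs)
    have m2: "max x \<Delta> powr (\<alpha>-1) \<le> P1" unfolding P1_def
      using True p alpha by (intro powr_mono2') auto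
    have "\<bar>W\<bar> \<le> K * P1" using hW m2 K by (meson mult_left_mono order_trans)
    then have W2: "W^2 \<le> (K * P1)^2" by (rule sq_le_of_abs)
    have "(U - V)^2 \<le> 2*(K * P1 * \<bar>x - p\<bar>)^2 + 2*((K * P1)^2 / (4 * (real n)^2))"
      using s U2 W2 n0 unfolding V2 by (smt (verit) divide_right_mono zero_le_power)
    also have "\<dots> = 2*K^2*P1^2 * (x-p)^2 + K^2*P1^2/(2*(real n)^2)"
      by (simp add: power_mult_distrib power2_abs)
    finally have "(U - V)^2 \<le> 2*K^2*P1^2 * (x-p)^2 + K^2*P1^2/(2*(real n)^2)" .
    moreover have "(2*K^2*q^2*p^2 + K^2*q^2/(2*(real n)^2)) * R \<ge> 0" using Q0 R by simp
    ultimately show ?thesis unfolding P1_def q_def by linarith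
  next
    case False
    have m: "max (min x p) \<Delta> powr (\<alpha>-1) \<le> q" unfolding q_def
      using D alpha by (intro powr_mono2') auto
    have xp: "\<bar>x - p\<bar> \<le> p" using False x p by auto
    have "\<bar>U\<bar> \<le> K * q * p"
    proof -
      have "\<bar>U\<bar> \<le> K * max (min x p) \<Delta> powr (\<alpha>-1) * \<bar>x - p\<bar>" by (rule hU)
      also have "\<dots> \<le> K * q * p" using m xp K q0 by (intro mult_mono) (auto intro: mult_left_mono)
      finally show ?thesis .
    qed
    then have U2: "U^2 \<le> (K * q * p)^2" by (rule sq_le_of_abs)
    have m2: "max x \<Delta> powr (\<alpha>-1) \<le> q" unfolding q_def using D alpha by (intro powr_mono2') auto
    have "\<bar>W\<bar> \<le> K * q" using hW m2 K by (meson mult_left_mono order_trans)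
    then have W2: "W^2 \<le> (K * q)^2" by (rule sq_le_of_abs)
    have "(U - V)^2 \<le> 2*(K * q * p)^2 + 2*((K * q)^2 / (4 * (real n)^2))"
      using s U2 W2 n0 unfolding V2 by (smt (verit) divide_right_mono zero_le_power)
    also have "\<dots> = (2*K^2*q^2*p^2 + K^2*q^2/(2*(real n)^2))"
      by (simp add: power_mult_distrib)
    also have "\<dots> \<le> (2*K^2*q^2*p^2 + K^2*q^2/(2*(real n)^2)) * R"
      using mult_left_mono[of 1 R "2*K^2*q^2*p^2 + K^2*q^2/(2*(real n)^2)"] R False Q0 by simp
    finally have "(U - V)^2 \<le> (2*K^2*q^2*p^2 + K^2*q^2/(2*(real n)^2)) * R" .
    moreover have "2*K^2*P1^2 * (x-p)^2 \<ge> 0" "K^2*P1^2/(2*(real n)^2) \<ge> 0" by simp_all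
    ultimately show ?thesis unfolding P1_def q_def by linarith
  qed
qed


lemma main_bound:
  fixes \<alpha> c0 A G \<Delta> p :: real and \<phi> :: "real \<Rightarrow> real" and n :: nat
  assumes alpha: "0 < \<alpha>" "\<alpha> < 1"
    and diff: "\<forall>k<4. \<forall>x\<in>{0<..1}.
        (phider k \<phi> has_vector_derivative phider (Suc k) \<phi> x) (at x within {0<..1})"
    and A: "A > 0" "\<forall>m\<in>{1..4}. \<forall>x\<in>{0<..1}. \<bar>phider m \<phi> x\<bar> \<le> A * x powr (\<alpha> - real m)"
    and G: "G > 0" "\<forall>m\<in>{1..4}. \<forall>t\<in>{0..1}. \<bar>poly (pderiv (Pp m)) t\<bar> \<le> G \<and> \<bar>poly (pderiv (pderiv (Pp m))) t\<bar> \<le> G"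
    and c0: "c0 > 0"
    and n: "n \<ge> 1" and Dl: "c0 / real n \<le> \<Delta>" and Dp: "\<Delta> < p" and p1: "p \<le> 1"
  shows "measure_pmf.variance (poisson_pmf (real n * p))
       (\<lambda>N. phibar \<phi> \<Delta> (real N / real n)
            - real N / (2 * (real n)^2) * phibar2 \<phi> \<Delta> (real N / real n)
            - \<phi> p + p * phider 2 \<phi> p / (2 * real n))
     \<le> (8*(64*A*G + A)^2 + 2*(64*A*G + A)^2/c0 + (64*A*G + A)^2*(2 + 1/(2*c0^2)) * c0 powr (2*\<alpha>-2) * (1 + 6/((1 - ln 2)/2)^3))
       * (p powr (2*\<alpha>-1) / real n + 1 / ((real n)^4 * \<Delta> powr (4 - 2*\<alpha>)) + p / real n)"
proof -
  define K where "K = 64*A*G + A"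
  have K: "K > 0" unfolding K_def using A G by (simp add: add_pos_nonneg)
  define N where "N = real n"
  have N: "N \<ge> 1" unfolding N_def using n by simp
  have cN: "c0 / N > 0" using c0 N by simp
  have D0: "\<Delta> > 0" using Dl cN unfolding N_def by linarith
  have D1': "\<Delta> < 1" using Dp p1 by simp
  have p0: "p > 0" using D0 Dp by simp
  define l where "l = real n * p"
  have l0: "l > 0" unfolding l_def using n p0 by simp
  have dphi: "deriv (phibar \<phi> \<Delta>) = D1 \<phi> \<Delta>"
    by (rule ext, rule DERIV_imp_deriv, rule phibar_D1[OF D0 D1' diff])
  have pb2: "phibar2 \<phi> \<Delta> = D2 \<phi> \<Delta>"
    unfolding phibar2_def dphi by (rule ext, rule DERIV_imp_deriv, rule D1_D2[OF D0 D1' diff])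
  note DB = D_bounds[OF alpha D0 D1' A(1) G(1) A(2) G(2), folded K_def]
  have Ubd: "\<bar>phibar \<phi> \<Delta> x - phibar \<phi> \<Delta> p\<bar> \<le> K * max (min x p) \<Delta> powr (\<alpha>-1) * \<bar>x - p\<bar>" if "x \<ge> 0" for x
    by (rule mvt_bound[where F'="D1 \<phi> \<Delta>"]) (use phibar_D1[OF D0 D1' diff] DB(1) K alpha D0 that p0 in auto)
  define X where "X = (\<lambda>N. phibar \<phi> \<Delta> (real N / real n)
            - real N / (2 * (real n)^2) * phibar2 \<phi> \<Delta> (real N / real n)
            - \<phi> p + p * phider 2 \<phi> p / (2 * real n))"
  define c1 where "c1 = phibar \<phi> \<Delta> p - \<phi> p + p * phider 2 \<phi> p / (2 * real n)"
  define U where "U = (\<lambda>k::nat. phibar \<phi> \<Delta> (real k / real n) - phibar \<phi> \<Delta> p)"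
  define V where "V = (\<lambda>k::nat. (real k / real n) * D2 \<phi> \<Delta> (real k / real n) / (2 * real n))"
  have XUV: "X k - c1 = U k - V k" for k
    unfolding X_def c1_def U_def V_def pb2 using n by (simp add: power2_eq_square field_simps)
  have qD: "max y \<Delta> powr (\<alpha>-1) \<le> \<Delta> powr (\<alpha>-1)" for y using D0 alpha by (intro powr_mono2') auto
  have Ub: "\<bar>U k\<bar> \<le> K * \<Delta> powr (\<alpha>-1) * 2" for k
  proof -
    define x where "x = real k / real n"
    have x0: "x \<ge> 0" unfolding x_def by simp
    define x' where "x' = min x 2"
    have x'0: "x' \<ge> 0" "x' \<le> 2" unfolding x'_def using x0 by auto
    have "phibar \<phi> \<Delta> x = phibar \<phi> \<Delta> x'" unfolding x'_def phibar_def using D1' by auto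
    then have "\<bar>U k\<bar> = \<bar>phibar \<phi> \<Delta> x' - phibar \<phi> \<Delta> p\<bar>" unfolding U_def x_def by simp
    also have "\<dots> \<le> K * max (min x' p) \<Delta> powr (\<alpha>-1) * \<bar>x' - p\<bar>" by (rule Ubd[OF x'0(1)])
    also have "\<dots> \<le> K * \<Delta> powr (\<alpha>-1) * 2"
      using qD[of "min x' p"] K x'0 p0 p1 by (intro mult_mono mult_left_mono) auto
    finally show ?thesis .
  qed
  have Wb: "\<bar>(real k / real n) * D2 \<phi> \<Delta> (real k / real n)\<bar> \<le> K * max (real k / real n) \<Delta> powr (\<alpha>-1)" for k
    using DB(2)[of "real k / real n"] by simp
  have Vb: "\<bar>V k\<bar> \<le> K * \<Delta> powr (\<alpha>-1)" for k
  proof -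
    have "\<bar>V k\<bar> = \<bar>(real k / real n) * D2 \<phi> \<Delta> (real k / real n)\<bar> / (2 * real n)"
      unfolding V_def using n by (simp add: abs_mult)
    also have "\<dots> \<le> \<bar>(real k / real n) * D2 \<phi> \<Delta> (real k / real n)\<bar>" using n by (simp add: divide_le_eq mult_le_cancel_left1)
    also have "\<dots> \<le> K * \<Delta> powr (\<alpha>-1)" using Wb[of k] qD[of "real k / real n"] K
      by (meson mult_left_mono less_imp_le order_trans)
    finally show ?thesis .
  qed
  have Xb: "\<bar>X k\<bar> \<le> K * \<Delta> powr (\<alpha>-1) * 3 + \<bar>c1\<bar>" for k
    using XUV[of k] Ub[of k] Vb[of k] by linarith
  have var1: "measure_pmf.variance (poisson_pmf l) X \<le> measure_pmf.expectation (poisson_pmf l) (\<lambda>k. (X k - c1)^2)"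
    by (rule var_le[OF Xb])
  define P1s where "P1s = ((p/2) powr (\<alpha>-1))^2"
  define B2 where "B2 = 2*K^2*(\<Delta> powr (\<alpha>-1))^2*p^2 + K^2*(\<Delta> powr (\<alpha>-1))^2/(2*(real n)^2)"
  define Psi where "Psi = (\<lambda>k::nat. 2*K^2*P1s * ((real k - l)^2 / (real n)^2) + B2 * (2 powr (l/2) * (1/2)^k)
      + K^2*P1s/(2*(real n)^2))"
  have pw: "(X k - c1)^2 \<le> Psi k" for k
  proof -
    define x where "x = real k / real n"
    have x0: "x \<ge> 0" unfolding x_def by simp
    define R where "R = 2 powr (l/2) * (1/2::real)^k"
    have R0: "R \<ge> 0" unfolding R_def by simp
    have R1: "R \<ge> 1" if "x < p/2"
    proof -
      have "real k < l/2" using that n unfolding x_def l_def by (simp add: field_simps)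
      then have "2 powr (real k) \<le> 2 powr (l/2)" by (intro powr_mono) auto
      moreover have "(1/2::real)^k = 1 / 2 powr (real k)" by (simp add: powr_realpow power_one_over)
      ultimately show ?thesis unfolding R_def by simp
    qed
    have "(U k - V k)^2 \<le> 2*K^2*((p/2) powr (\<alpha>-1))^2 * (x-p)^2
       + (2*K^2*(\<Delta> powr (\<alpha>-1))^2*p^2 + K^2*(\<Delta> powr (\<alpha>-1))^2/(2*(real n)^2)) * R
       + K^2*((p/2) powr (\<alpha>-1))^2/(2*(real n)^2)"
    proof -
      have Uk: "U k = phibar \<phi> \<Delta> x - phibar \<phi> \<Delta> p" unfolding U_def x_def ..
      have Vk: "V k = (x * D2 \<phi> \<Delta> x) / (2 * real n)" unfolding V_def x_def ..
      show ?thesis unfolding Uk Vk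
        by (rule pointwise[OF Ubd[OF x0] Wb[of k, folded x_def] refl x0 p0 D0 alpha(2) less_imp_le[OF K] n R0 R1])
    qed
    moreover have "(x - p)^2 = (real k - l)^2 / (real n)^2"
      unfolding x_def l_def using n by (simp add: power_divide[symmetric] diff_divide_distrib)
    ultimately show ?thesis unfolding XUV Psi_def P1s_def B2_def R_def by simp
  qed
  note m2 = poisson_second_moment[OF l0] and h2 = poisson_half[OF l0]
  have intPsi: "integrable (measure_pmf (poisson_pmf l)) Psi"
    unfolding Psi_def using m2(1) h2(1) by auto
  have EPsi: "measure_pmf.expectation (poisson_pmf l) Psi
      = 2*K^2*P1s * (l / (real n)^2) + B2 * (2 powr (l/2) * exp (-l/2)) + K^2*P1s/(2*(real n)^2)"
    unfolding Psi_def using m2 h2 by (simp add: Bochner_Integration.integral_add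
        Bochner_Integration.integrable_add Bochner_Integration.integral_divide_zero)
  have int1: "integrable (measure_pmf (poisson_pmf l)) (\<lambda>k. (X k - c1)^2)"
  proof (rule measure_pmf.integrable_const_bound[where B="(K * \<Delta> powr (\<alpha>-1) * 3 + \<bar>c1\<bar> + \<bar>c1\<bar>)^2"])
    show "AE x in measure_pmf (poisson_pmf l). norm ((X x - c1)^2) \<le> (K * \<Delta> powr (\<alpha>-1) * 3 + \<bar>c1\<bar> + \<bar>c1\<bar>)^2"
    proof (rule AE_I2)
      fix k
      have "\<bar>X k - c1\<bar> \<le> K * \<Delta> powr (\<alpha>-1) * 3 + \<bar>c1\<bar> + \<bar>c1\<bar>" using Xb[of k] by linarith
      then show "norm ((X k - c1)^2) \<le> (K * \<Delta> powr (\<alpha>-1) * 3 + \<bar>c1\<bar> + \<bar>c1\<bar>)^2"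
        using sq_le_of_abs by simp
    qed
  qed simp
  have "measure_pmf.variance (poisson_pmf l) X \<le> measure_pmf.expectation (poisson_pmf l) Psi"
    using var1 integral_mono[OF int1 intPsi pw] by linarith
  also have "\<dots> \<le> (8*K^2 + 2*K^2/c0 + K^2*(2 + 1/(2*c0^2)) * c0 powr (2*\<alpha>-2) * (1 + 6/((1 - ln 2)/2)^3)) * (p powr (2*\<alpha>-1) / real n)"
  proof -
    have "l / (real n)^2 = p / real n" unfolding l_def using n by (simp add: power2_eq_square)
    then show ?thesis unfolding EPsi P1s_def B2_def
      using L_final[OF alpha K c0 n Dl Dp p1] unfolding l_def by simp
  qed
  also have "\<dots> \<le> (8*K^2 + 2*K^2/c0 + K^2*(2 + 1/(2*c0^2)) * c0 powr (2*\<alpha>-2) * (1 + 6/((1 - ln 2)/2)^3))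
       * (p powr (2*\<alpha>-1) / real n + 1 / ((real n)^4 * \<Delta> powr (4 - 2*\<alpha>)) + p / real n)"
  proof -
    have Cp: "8*K^2 + 2*K^2/c0 + K^2*(2 + 1/(2*c0^2)) * c0 powr (2*\<alpha>-2) * (1 + 6/((1 - ln 2)/2)^3) \<ge> 0"
    proof -
      have "(1 - ln 2)/2 > (0::real)" using ln_2_less_1 by simp
      then have "K^2*(2 + 1/(2*c0^2)) * c0 powr (2*\<alpha>-2) * (1 + 6/((1 - ln 2)/2)^3) \<ge> 0"
        using c0 by (intro mult_nonneg_nonneg) (auto intro: add_nonneg_nonneg)
      moreover have "2*K^2/c0 \<ge> 0" using c0 by simp
      ultimately show ?thesis by simp
    qed
    have "1 / ((real n)^4 * \<Delta> powr (4 - 2*\<alpha>)) \<ge> 0" "p / real n \<ge> 0" using p0 D0 by simp_all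
    then show ?thesis using Cp by (intro mult_left_mono) auto
  qed
  finally show ?thesis unfolding X_def l_def K_def .
qed

theorem lemma7:
  fixes \<alpha> W c c' c0 :: real and \<phi> :: "real \<Rightarrow> real"
  assumes alpha: "0 < \<alpha>" "\<alpha> < 1"
    and nonneg: "\<forall>x\<in>{0..1}. 0 \<le> \<phi> x"
    and diff: "\<forall>k<4. \<forall>x\<in>{0<..1}.
        (phider k \<phi> has_vector_derivative phider (Suc k) \<phi> x) (at x within {0<..1})"
    and cont4: "continuous_on {0<..1} (phider 4 \<phi>)"
    and W: "W > 0"
    and bound4: "\<forall>p\<in>{0<..1}.
        (2-\<alpha>)*(3-\<alpha>)*(4-\<alpha>)*W*p powr (\<alpha>-4) + c' \<le> \<bar>phider 4 \<phi> p\<bar> \<and>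
        \<bar>phider 4 \<phi> p\<bar> \<le> (2-\<alpha>)*(3-\<alpha>)*(4-\<alpha>)*W*p powr (\<alpha>-4) + c"
    and c0: "c0 > 0"
  shows "\<exists>C>0. \<forall>(n::nat) \<Delta> p. n \<ge> 1 \<longrightarrow> c0 / real n \<le> \<Delta> \<longrightarrow> \<Delta> < p \<longrightarrow> p \<le> 1 \<longrightarrow>
     measure_pmf.variance (poisson_pmf (real n * p))
       (\<lambda>N. phibar \<phi> \<Delta> (real N / real n)
            - real N / (2 * (real n)^2) * phibar2 \<phi> \<Delta> (real N / real n)
            - \<phi> p + p * phider 2 \<phi> p / (2 * real n))
     \<le> C * (p powr (2*\<alpha>-1) / real n + 1 / ((real n)^4 * \<Delta> powr (4 - 2*\<alpha>)) + p / real n)"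
proof -
  obtain A where A: "A > 0" "\<forall>m\<in>{1..4}. \<forall>x\<in>{0<..1}. \<bar>phider m \<phi> x\<bar> \<le> A * x powr (\<alpha> - real m)"
    using phi_bounds[OF alpha diff W bound4] by blast
  obtain G where G: "G > 0" "\<forall>m\<in>{1..4}. \<forall>t\<in>{0..1}. \<bar>poly (pderiv (Pp m)) t\<bar> \<le> G \<and> \<bar>poly (pderiv (pderiv (Pp m))) t\<bar> \<le> G"
    using Pp_bound by blast
  define K where "K = 64*A*G + A"
  have K: "K > 0" unfolding K_def using A G by (simp add: add_pos_nonneg)
  define C where "C = 8*K^2 + 2*K^2/c0 + K^2*(2 + 1/(2*c0^2)) * c0 powr (2*\<alpha>-2) * (1 + 6/((1 - ln 2)/2)^3)"
  have C: "C > 0"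
  proof -
    have "(1 - ln 2)/2 > (0::real)" using ln_2_less_1 by simp
    then have "K^2*(2 + 1/(2*c0^2)) * c0 powr (2*\<alpha>-2) * (1 + 6/((1 - ln 2)/2)^3) \<ge> 0"
      using c0 by (intro mult_nonneg_nonneg) (auto intro: add_nonneg_nonneg)
    moreover have "2*K^2/c0 \<ge> 0" using c0 by simp
    moreover have "8*K^2 > 0" using K by simp
    ultimately show ?thesis unfolding C_def by linarith
  qed
  show ?thesis
    by (intro exI[of _ C] conjI C allI impI, unfold C_def K_def, rule main_bound[OF alpha diff A G c0]) auto
qed


end
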